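(* Let $\mathbb K$ be a field with $\operatorname{char}(\mathbb K)=0$, $n\ge2$, and $\mathcal G_n$, $z_e$ as in the context. If $f\in A_{\mathbb K}(\mathcal G_n)$ satisfies $f(z_e)\neq0$, then $\operatorname{supp}(f)=\{x\in\mathcal G_n:f(x)\neq0\}$ has nonempty interior; thus $f\notin S_{\mathbb K}(\mathcal G_n)$.
   Context: Let $X=\{\mathbf 0,\mathbf 1\}$, $X^*$ the finite words (with empty word $\varnothing$), $X^\omega$ the infinite words, $C(\eta)=\{\eta w:w\in X^\omega\}$, $\mathbf 1^\infty$ the infinite word of ones. Fix $n\ge2$, a primitive polynomial $f_n$ of degree $n$ over $\mathbb F_2$ with root $\alpha$, and $\operatorname{Tr}(\beta)=\beta+\beta^2+\dots+\beta^{2^{n-1}}\in\mathbb F_2$. $\mathfrak G_n$ is the group of automorphisms of the binary rooted tree $X^*$ generated by $a$ ($a\cdot(\mathbf 0w)=\mathbf 1w$, $a\cdot(\mathbf 1w)=\mathbf 0w$) and $\iota_n(\beta)$, $\beta\in\mathbb F_{2^n}$, where $\iota_n(\beta)\cdot(\mathbf 0w)=\mathbf 0(a^{\operatorname{Tr}(\beta)}\cdot w)$, $\iota_n(\beta)\cdot(\mathbf 1w)=\mathbf 1(\iota_n(\alpha\beta)\cdot w)$; restrictions $g|_x$ are given by $g\cdot(xw)=(g\cdot x)(g|_x\cdot w)$; $e$ is the identity. $\mathcal G_n$ is the groupoid of germs of the action of the inverse semigroup $\{(\eta,g,\mu)\}\cup\{0\}$ on $X^\omega$ with $(\eta,g,\mu):C(\mu)\to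 C(\eta)$, $\mu w\mapsto\eta(g\cdot w)$; germs $[(\eta,g,\mu),w]$, $w\in C(\mu)$, with $[(\eta,g,\mu),w]=[(\eta',g',\mu'),w']$ iff $w=w'$ and some finite prefix $\nu=\mu\epsilon=\mu'\epsilon'$ of $w$ satisfies $\eta(g\cdot\epsilon)=\eta'(g'\cdot\epsilon')$ and $g|_\epsilon=g'|_{\epsilon'}$; basic open bisections $\{[s,w]:w\in U\}$. $z_e=[(\varnothing,e,\varnothing),\mathbf 1^\infty]$. $A_{\mathbb K}(\mathcal G_n)$ is the Steinberg algebra (the $\mathbb K$-span of characteristic functions of compact open bisections), and $S_{\mathbb K}(\mathcal G_n)$ is its ideal of singular functions: $f=\sum_i c_i1_{S_i}$ with each $S_i$ relatively closed in an open bisection and of empty interior (equivalently, $\operatorname{supp}(f)$ has empty interior). *)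

theory Defs
  imports "HOL-Analysis.Analysis" "HOL-Library.Z2" "HOL-Computational_Algebra.Polynomial_Factorial"
begin

text \<open>Letter 0 is False, letter 1 is True.
  Elements of F_(2^n) are represented by their reduced residues modulo f,
  i.e. polynomials of degree < n; the root alpha of f is the class of x.\<close>

definition primitive_poly :: "bit poly \<Rightarrow> nat \<Rightarrow> bool" where
  "primitive_poly f n \<longleftrightarrow> degree f = n \<and> irreducible f \<and>
     [:0, 1:] ^ (2 ^ n - 1) mod f = 1 \<and>
     (\<forall>k. 0 < k \<and> k < 2 ^ n - 1 \<longrightarrow> [:0, 1:] ^ k mod f \<noteq> 1)"

definition field_elems :: "bit poly \<Rightarrow> bit poly set" where
  "field_elems f = {\<beta>. \<beta> = \<beta> mod f}"

definition alpha_mult :: "bit poly \<Rightarrow> bit poly \<Rightarrow> bit poly" where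
  "alpha_mult f \<beta> = ([:0, 1:] * \<beta>) mod f"

definition trace :: "bit poly \<Rightarrow> nat \<Rightarrow> bit poly \<Rightarrow> bit poly" where
  "trace f n \<beta> = (\<Sum>i<n. \<beta> ^ (2 ^ i)) mod f"

fun a_act :: "bool list \<Rightarrow> bool list" where
  "a_act [] = []"
| "a_act (x # w) = (\<not> x) # w"

fun iota :: "bit poly \<Rightarrow> nat \<Rightarrow> bit poly \<Rightarrow> bool list \<Rightarrow> bool list" where
  "iota f n \<beta> [] = []"
| "iota f n \<beta> (False # w) = False # (if trace f n \<beta> = 1 then a_act w else w)"
| "iota f n \<beta> (True # w) = True # iota f n (alpha_mult f \<beta>) w"

inductive_set Ggroup :: "bit poly \<Rightarrow> nat \<Rightarrow> (bool list \<Rightarrow> bool list) set"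
  for f :: "bit poly" and n :: nat where
  gen_id: "id \<in> Ggroup f n"
| gen_a: "a_act \<in> Ggroup f n"
| gen_iota: "\<beta> \<in> field_elems f \<Longrightarrow> iota f n \<beta> \<in> Ggroup f n"
| gen_comp: "g \<in> Ggroup f n \<Longrightarrow> h \<in> Ggroup f n \<Longrightarrow> g \<circ> h \<in> Ggroup f n"
| gen_inv: "g \<in> Ggroup f n \<Longrightarrow> inv g \<in> Ggroup f n"

definition restr :: "(bool list \<Rightarrow> bool list) \<Rightarrow> bool list \<Rightarrow> bool list \<Rightarrow> bool list" where
  "restr g x = (\<lambda>w. drop (length x) (g (x @ w)))"

type_synonym iword = "nat \<Rightarrow> bool"

definition pref :: "iword \<Rightarrow> nat \<Rightarrow> bool list" where
  "pref w k = map w [0..<k]"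

definition conc :: "bool list \<Rightarrow> iword \<Rightarrow> iword" where
  "conc \<eta> v = (\<lambda>k. if k < length \<eta> then \<eta> ! k else v (k - length \<eta>))"

definition sfx :: "nat \<Rightarrow> iword \<Rightarrow> iword" where
  "sfx m w = (\<lambda>k. w (k + m))"

definition cyl :: "bool list \<Rightarrow> iword set" where
  "cyl \<eta> = {conc \<eta> w | w. True}"

definition ones :: iword where "ones = (\<lambda>_. True)"

definition act_inf :: "(bool list \<Rightarrow> bool list) \<Rightarrow> iword \<Rightarrow> iword" where
  "act_inf g w = (\<lambda>k. g (pref w (Suc k)) ! k)"

definition cantor_open :: "iword set \<Rightarrow> bool" where
  "cantor_open U \<longleftrightarrow> (\<forall>w\<in>U. \<exists>k. cyl (pref w k) \<subseteq> U)"

type_synonym rep = "bool list \<times> (bool list \<Rightarrow> bool list) \<times> bool list \<times> iword"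

text \<open>(eta, g, mu) acts C(mu) -> C(eta), mu w |-> eta (g w).\<close>
definition valid_rep :: "bit poly \<Rightarrow> nat \<Rightarrow> rep \<Rightarrow> bool" where
  "valid_rep f n r = (case r of (\<eta>, g, \<mu>, w) \<Rightarrow> g \<in> Ggroup f n \<and> w \<in> cyl \<mu>)"

definition germ_eq :: "rep \<Rightarrow> rep \<Rightarrow> bool" where
  "germ_eq r r' = (case r of (\<eta>, g, \<mu>, w) \<Rightarrow> case r' of (\<eta>', g', \<mu>', w') \<Rightarrow>
     w = w' \<and> (\<exists>k \<epsilon> \<epsilon>'. pref w k = \<mu> @ \<epsilon> \<and> pref w k = \<mu>' @ \<epsilon>' \<and>
        \<eta> @ g \<epsilon> = \<eta>' @ g' \<epsilon>' \<and> restr g \<epsilon> = restr g' \<epsilon>'))"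

definition germ :: "bit poly \<Rightarrow> nat \<Rightarrow> rep \<Rightarrow> rep set" where
  "germ f n r = {r'. valid_rep f n r' \<and> germ_eq r r'}"

definition Grpd :: "bit poly \<Rightarrow> nat \<Rightarrow> rep set set" where
  "Grpd f n = {germ f n r | r. valid_rep f n r}"

definition z_e :: "bit poly \<Rightarrow> nat \<Rightarrow> rep set" where
  "z_e f n = germ f n ([], id, [], ones)"

text \<open>Source and range of a germ (independent of the representative).\<close>
definition src :: "rep set \<Rightarrow> iword" where
  "src x = (case (SOME r. r \<in> x) of (\<eta>, g, \<mu>, w) \<Rightarrow> w)"

definition rng :: "rep set \<Rightarrow> iword" where
  "rng x = (case (SOME r. r \<in> x) of (\<eta>, g, \<mu>, w) \<Rightarrow>
              conc \<eta> (act_inf g (sfx (length \<mu>) w)))"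

definition basic_sets :: "bit poly \<Rightarrow> nat \<Rightarrow> rep set set set" where
  "basic_sets f n = {{germ f n (\<eta>, g, \<mu>, w) | w. w \<in> U} | \<eta> g \<mu> U.
      g \<in> Ggroup f n \<and> U \<subseteq> cyl \<mu> \<and> cantor_open U}"

definition Gtop :: "bit poly \<Rightarrow> nat \<Rightarrow> rep set topology" where
  "Gtop f n = topology_generated_by (basic_sets f n)"

definition compact_open_bisection :: "bit poly \<Rightarrow> nat \<Rightarrow> rep set set \<Rightarrow> bool" where
  "compact_open_bisection f n B \<longleftrightarrow> openin (Gtop f n) B \<and> compactin (Gtop f n) B \<and>
     inj_on src B \<and> inj_on rng B"

definition steinberg :: "bit poly \<Rightarrow> nat \<Rightarrow> (rep set \<Rightarrow> 'k::field) set" where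
  "steinberg f n = {h. \<exists>m (c :: nat \<Rightarrow> 'k) B. (\<forall>i<m. compact_open_bisection f n (B i)) \<and>
      h = (\<lambda>x. \<Sum>i<m. c i * indicator (B i) x)}"

definition supp :: "bit poly \<Rightarrow> nat \<Rightarrow> (rep set \<Rightarrow> 'k::field) \<Rightarrow> rep set set" where
  "supp f n h = {x \<in> Grpd f n. h x \<noteq> 0}"

definition singular :: "bit poly \<Rightarrow> nat \<Rightarrow> (rep set \<Rightarrow> 'k::field) set" where
  "singular f n = {h \<in> steinberg f n. Gtop f n interior_of supp f n h = {}}"

end

theory Submission
  imports Defs
begin

definition TA :: "(bool list \<Rightarrow> bool list) \<Rightarrow> bool" where
  "TA g \<longleftrightarrow> bij g \<and> (\<forall>u. length (g u) = length u) \<and> (\<forall>u v. take (length u) (g (u @ v)) = g u)"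

lemma TA_len: "TA g \<Longrightarrow> length (g u) = length u" by (simp add: TA_def)

lemma TA_app: "TA g \<Longrightarrow> g (u @ v) = g u @ restr g u v"
proof -
  assume "TA g"
  then have "take (length u) (g (u @ v)) = g u" by (simp add: TA_def)
  then show ?thesis unfolding restr_def by (metis append_take_drop_id)
qed

lemma restr_Nil[simp]: "restr g [] = g" by (simp add: restr_def)

lemma TA_restr_len: "TA g \<Longrightarrow> length (restr g u v) = length v"
  using TA_app[of g u v] TA_len[of g "u@v"] TA_len[of g u] by simp

lemma restr_app: "restr g (u @ v) = restr (restr g u) v"
  by (rule ext) (simp add: restr_def drop_drop add.commute)

lemma restr_comp: "TA g \<Longrightarrow> TA h \<Longrightarrow> restr (g \<circ> h) u = restr g (h u) \<circ> restr h u"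
proof (rule ext)
  fix z assume tg: "TA g" and th: "TA h"
  have "(g \<circ> h) (u @ z) = g (h u) @ restr g (h u) (restr h u z)"
    using TA_app[OF th] TA_app[OF tg] by simp
  then show "restr (g \<circ> h) u z = (restr g (h u) \<circ> restr h u) z"
    unfolding restr_def[of "g \<circ> h"] using TA_len[OF th, of u] TA_len[OF tg, of "h u"] by simp
qed

lemma TA_id: "TA id" by (simp add: TA_def)

lemma TA_comp: assumes tg: "TA g" and th: "TA h" shows "TA (g \<circ> h)"
proof -
  have "take (length u) (g (h (u @ v))) = g (h u)" for u v
  proof -
    have "g (h (u @ v)) = g (h u) @ restr g (h u) (restr h u v)"
      using TA_app[OF th] TA_app[OF tg] by simp
    then show ?thesis using TA_len[OF th, of u] TA_len[OF tg, of "h u"] by simp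
  qed
  then show ?thesis using tg th unfolding TA_def by (auto intro: bij_comp)
qed

lemma TA_inv: assumes "TA g" shows "TA (inv g)"
proof -
  have b: "bij g" and l: "\<And>u. length (g u) = length u" using assms by (auto simp: TA_def)
  have bi: "bij (inv g)" using b by (simp add: bij_imp_bij_inv)
  have gi: "\<And>x. g (inv g x) = x" using b by (meson bij_inv_eq_iff)
  have ig: "\<And>x. inv g (g x) = x" using b by (simp add: bij_is_inj)
  have li: "\<And>u. length (inv g u) = length u" using l gi by metis
  have "take (length u) (inv g (u @ v)) = inv g u" for u v
  proof -
    let ?z = "inv g (u @ v)"
    have "?z = take (length u) ?z @ drop (length u) ?z" by simp
    then have "g ?z = g (take (length u) ?z) @ restr g (take (length u) ?z) (drop (length u) ?z)"
      using TA_app[OF assms] by metis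
    then have "u @ v = g (take (length u) ?z) @ restr g (take (length u) ?z) (drop (length u) ?z)"
      using gi by simp
    moreover have "length (g (take (length u) ?z)) = length u" using l li by simp
    ultimately have "g (take (length u) ?z) = u" by (metis append_eq_append_conv)
    then show ?thesis using ig by metis
  qed
  then show ?thesis using bi li by (simp add: TA_def)
qed

lemma a_act_inv: "a_act (a_act w) = w" by (cases w) auto
lemma a_act_len[simp]: "length (a_act w) = length w" by (cases w) auto

lemma TA_a: "TA a_act"
proof -
  have "bij a_act" by (metis a_act_inv bijI' )
  moreover have "take (length u) (a_act (u @ v)) = a_act u" for u v by (cases u) auto
  ultimately show ?thesis by (simp add: TA_def)
qed

lemma iota_invol: "iota f n \<beta> (iota f n \<beta> w) = w"
proof (induction w arbitrary: \<beta>)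
  case Nil then show ?case by simp
next
  case (Cons x w) then show ?case by (cases x) (auto simp: a_act_inv)
qed

lemma iota_len[simp]: "length (iota f n \<beta> w) = length w"
proof (induction w arbitrary: \<beta>)
  case Nil then show ?case by simp
next
  case (Cons x w) then show ?case by (cases x) auto
qed

lemma iota_take: "take (length u) (iota f n \<beta> (u @ v)) = iota f n \<beta> u"
proof (induction u arbitrary: \<beta>)
  case Nil then show ?case by simp
next
  case (Cons x u) then show ?case by (cases x; cases u) auto
qed

lemma TA_iota: "TA (iota f n \<beta>)"
proof -
  have "bij (iota f n \<beta>)" by (metis iota_invol bijI')
  then show ?thesis by (simp add: TA_def iota_take)
qed

lemma TA_G: "g \<in> Ggroup f n \<Longrightarrow> TA g"
proof (induction rule: Ggroup.induct)
  case gen_id then show ?case by (rule TA_id)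
next
  case gen_a then show ?case by (rule TA_a)
next
  case (gen_iota \<beta>) show ?case by (rule TA_iota)
next
  case (gen_comp g h) then show ?case using TA_comp[of g h] by blast
next
  case (gen_inv g) then show ?case by (simp add: TA_inv)
qed

abbreviation X :: "bit poly" where "X \<equiv> [:0, 1:]"

lemma two_bp: "(2::bit poly) = 0"
proof -
  have "(2::bit poly) = [:2:]" by (simp add: numeral_poly)
  then show ?thesis by simp
qed

lemma one_one_bp: "(1::bit poly) + 1 = 0"
  using two_bp by (metis one_add_one)

lemma bp_add_self: "(a::bit poly) + a = 0"
  by (metis mult_2 mult_zero_left two_bp)

lemma bp_minus: "- (a::bit poly) = a"
  by (metis add.inverse_unique bp_add_self)

lemma bp_diff: "(a::bit poly) - b = a + b"
  by (metis bp_minus diff_conv_add_uminus)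

lemma frob2: "((a::bit poly) + b) ^ 2 = a ^ 2 + b ^ 2"
proof -
  have "(a + b) ^ 2 = a ^ 2 + 2 * a * b + b ^ 2" by (simp add: power2_sum)
  then show ?thesis by (simp add: two_bp)
qed

lemma frob: "((a::bit poly) + b) ^ (2 ^ i) = a ^ (2 ^ i) + b ^ (2 ^ i)"
proof (induction i)
  case 0 then show ?case by simp
next
  case (Suc i)
  have "(a + b) ^ (2 ^ Suc i) = ((a + b) ^ (2 ^ i)) ^ 2" by (simp add: power_mult[symmetric] mult.commute)
  also have "\<dots> = (a ^ (2^i)) ^ 2 + (b ^ (2^i)) ^ 2" using Suc frob2 by simp
  also have "\<dots> = a ^ (2 ^ Suc i) + b ^ (2 ^ Suc i)" by (simp add: power_mult[symmetric] mult.commute)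
  finally show ?case .
qed

lemma frob_sum: "(\<Sum>i\<in>A. (g i :: bit poly)) ^ 2 = (\<Sum>i\<in>A. g i ^ 2)"
proof (induction A rule: infinite_finite_induct)
  case (infinite A) then show ?case by simp
next
  case empty then show ?case by simp
next
  case (insert x F) then show ?case by (simp add: frob2)
qed

locale prim =
  fixes f :: "bit poly" and n :: nat
  assumes n2: "n \<ge> 2" and pp: "primitive_poly f n"
begin

abbreviation N :: nat where "N \<equiv> 2 ^ n - 1"
abbreviation F :: "bit poly set" where "F \<equiv> field_elems f"

lemma degf: "degree f = n" using pp by (simp add: primitive_poly_def)
lemma irrf: "irreducible f" using pp by (simp add: primitive_poly_def)
lemma XN: "X ^ N mod f = 1" using pp by (simp add: primitive_poly_def)
lemma Xprim: "0 < k \<Longrightarrow> k < N \<Longrightarrow> X ^ k mod f \<noteq> 1" using pp by (simp add: primitive_poly_def)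
lemma f0: "f \<noteq> 0" using degf n2 by auto
lemma Npos: "N \<ge> 1"
proof -
  have "(2::nat) ^ 2 \<le> 2 ^ n" by (rule power_increasing) (use n2 in auto)
  then show ?thesis by simp
qed

lemma F_iff: "\<beta> \<in> F \<longleftrightarrow> \<beta> mod f = \<beta>" by (auto simp: field_elems_def)
lemma mod_F[simp]: "\<beta> mod f \<in> F" by (simp add: F_iff)
lemma zero_F[simp]: "0 \<in> F" by (simp add: F_iff)
lemma add_F: "\<beta> \<in> F \<Longrightarrow> \<gamma> \<in> F \<Longrightarrow> \<beta> + \<gamma> \<in> F"
  by (simp add: F_iff poly_mod_add_left)
lemma one_mod: "1 mod f = (1::bit poly)"
  by (rule mod_poly_less) (use degf n2 in auto)
lemma one_F: "1 \<in> F" using one_mod F_iff by simp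

lemma deg_F: "\<beta> \<in> F \<Longrightarrow> \<beta> \<noteq> 0 \<Longrightarrow> degree \<beta> < n"
  using degree_mod_less'[OF f0, of \<beta>] F_iff degf by auto

lemma XqN: "X ^ (q * N) mod f = 1"
proof -
  have "X ^ (q * N) mod f = (X ^ N) ^ q mod f" by (metis power_mult mult.commute)
  also have "\<dots> = ((X ^ N) mod f) ^ q mod f" by (simp add: power_mod)
  also have "\<dots> = 1" using XN one_mod by simp
  finally show ?thesis .
qed

lemma Xshift: "(X ^ (k + q * N) * \<beta>) mod f = (X ^ k * \<beta>) mod f"
proof -
  have e: "(X ^ (k + q * N) * \<beta>) = ((X ^ k * \<beta>) * X ^ (q * N))"
    by (simp add: power_add ac_simps)
  have "(X ^ (k + q * N) * \<beta>) mod f = ((X ^ k * \<beta>) * X ^ (q * N)) mod f"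
    by (simp only: e)
  also have "\<dots> = ((X ^ k * \<beta>) * (X ^ (q * N) mod f)) mod f" by (simp add: mod_mult_right_eq)
  also have "\<dots> = (X ^ k * \<beta>) mod f" using XqN by simp
  finally show ?thesis .
qed

lemma Xmod: "(X ^ k * \<beta>) mod f = (X ^ (k mod N) * \<beta>) mod f"
  using Xshift[of "k mod N" "k div N" \<beta>] by (simp add: mult.commute)

lemma am_F: "alpha_mult f \<beta> \<in> F" by (simp add: alpha_mult_def)

lemma am_pow: "\<beta> \<in> F \<Longrightarrow> (alpha_mult f ^^ k) \<beta> = (X ^ k * \<beta>) mod f"
proof (induction k)
  case 0 then show ?case by (simp add: F_iff)
next
  case (Suc k)
  have ih: "(alpha_mult f ^^ k) \<beta> = (X ^ k * \<beta>) mod f" using Suc by simp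
  have "(alpha_mult f ^^ Suc k) \<beta> = alpha_mult f ((alpha_mult f ^^ k) \<beta>)" by simp
  also have "\<dots> = (X * ((X ^ k * \<beta>) mod f)) mod f"
    by (simp only: ih alpha_mult_def)
  also have "\<dots> = (X * (X ^ k * \<beta>)) mod f" by (rule mod_mult_right_eq)
  also have "\<dots> = (X ^ Suc k * \<beta>) mod f" by (simp only: power_Suc mult.assoc)
  finally show ?case .
qed

lemma am_pow_F: "\<beta> \<in> F \<Longrightarrow> (alpha_mult f ^^ k) \<beta> \<in> F" using am_pow by simp

lemma am_add: "alpha_mult f (\<beta> + \<gamma>) = alpha_mult f \<beta> + alpha_mult f \<gamma>"
  unfolding alpha_mult_def distrib_left by (rule poly_mod_add_left)

lemma am_zero: "alpha_mult f 0 = 0" by (simp add: alpha_mult_def)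

lemma Xpow_inj: assumes "k < l" "l < N" shows "X ^ k mod f \<noteq> X ^ l mod f"
proof
  assume eq: "X ^ k mod f = X ^ l mod f"
  have "X ^ (k + (N - l)) mod f = ((X ^ k mod f) * X ^ (N - l)) mod f"
    by (simp add: power_add mod_mult_left_eq)
  also have "\<dots> = ((X ^ l mod f) * X ^ (N - l)) mod f" using eq by simp
  also have "\<dots> = X ^ (l + (N - l)) mod f" by (simp add: power_add mod_mult_left_eq)
  also have "\<dots> = 1" using XN assms by simp
  finally have fin: "X ^ (k + (N - l)) mod f = 1" .
  have pos: "0 < k + (N - l)" using assms by linarith
  have lt: "k + (N - l) < N" using assms by linarith
  show False using Xprim[OF pos lt] fin by contradiction
qed

lemma Xpow_nz: "X ^ k mod f \<noteq> 0"
proof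
  assume eq: "X ^ k mod f = 0"
  have a: "X ^ (k mod N) mod f = 0" using Xmod[of k 1] eq by simp
  have lt: "k mod N < N" using Npos by simp
  have b: "X ^ N = X ^ (k mod N) * X ^ (N - k mod N)" using lt by (simp add: power_add[symmetric])
  have "X ^ N mod f = (X ^ (k mod N) mod f * X ^ (N - k mod N)) mod f" unfolding b by (rule mod_mult_left_eq[symmetric])
  then have "X ^ N mod f = 0" using a by simp
  then show False using XN by simp
qed

lemma F_finite_card: "finite F \<and> card F \<le> 2 ^ n"
proof -
  define c where "c = (\<lambda>p::bit poly. map (coeff p) [0..<n])"
  have sub: "c ` F \<subseteq> {xs. set xs \<subseteq> UNIV \<and> length xs = n}" by (auto simp: c_def)
  have inj: "inj_on c F"
  proof (rule inj_onI)
    fix p q assume p: "p \<in> F" and q: "q \<in> F" and e: "c p = c q"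
    show "p = q"
    proof (rule poly_eqI)
      fix i show "coeff p i = coeff q i"
      proof (cases "i < n")
        case True then show ?thesis using e unfolding c_def
          by (metis add_0 diff_zero nth_map_upt)
      next
        case False
        have "coeff p i = 0"
          using deg_F[OF p] False by (cases "p = 0") (auto intro: coeff_eq_0)
        moreover have "coeff q i = 0"
          using deg_F[OF q] False by (cases "q = 0") (auto intro: coeff_eq_0)
        ultimately show ?thesis by simp
      qed
    qed
  qed
  have U: "(UNIV :: bit set) = {0, 1}" by (auto intro: bit.exhaust)
  have finU: "finite (UNIV :: bit set)" by (subst U) simp
  have fin: "finite {xs :: bit list. set xs \<subseteq> UNIV \<and> length xs = n}"
    by (rule finite_lists_length_eq) (simp add: U)
  have cardU: "card (UNIV :: bit set) = 2" by (subst U) simp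
  have "finite F" using inj_on_finite[OF inj sub fin] .
  moreover have "card F \<le> card {xs :: bit list. set xs \<subseteq> UNIV \<and> length xs = n}"
    using card_inj_on_le[OF inj sub fin] .
  moreover have "card {xs :: bit list. set xs \<subseteq> UNIV \<and> length xs = n} = 2 ^ n"
    using card_lists_length_eq[OF finU, of n] cardU by simp
  ultimately show ?thesis by simp
qed

lemma F_finite: "finite F" using F_finite_card by simp

lemma F_pow: assumes "\<beta> \<in> F" "\<beta> \<noteq> 0" shows "\<exists>k<N. \<beta> = X ^ k mod f"
proof -
  let ?I = "(\<lambda>k. X ^ k mod f) ` {..<N}"
  have sub: "?I \<subseteq> F - {0}"
  proof
    fix x assume "x \<in> ?I"
    then obtain k where "x = X ^ k mod f" by blast
    then show "x \<in> F - {0}" using Xpow_nz[of k] mod_F[of "X ^ k"] by auto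
  qed
  have inj: "inj_on (\<lambda>k. X ^ k mod f) {..<N}"
    by (rule inj_onI) (metis Xpow_inj lessThan_iff linorder_neqE_nat)
  have cI: "card ?I = N" using card_image[OF inj] by simp
  have "card (F - {0}) = card F - 1" by (simp add: card_Diff_singleton F_finite)
  then have cF: "card (F - {0}) \<le> N" using F_finite_card by linarith
  have le: "card ?I \<le> card (F - {0})" using card_mono[OF _ sub] F_finite by blast
  have "?I = F - {0}"
    by (rule card_subset_eq[OF finite_Diff[OF F_finite] sub]) (use cI cF le in linarith)
  then show ?thesis using assms by auto
qed

definition tr :: "bit poly \<Rightarrow> bit poly" where "tr \<beta> = trace f n \<beta>"

lemma tr_F: "tr \<beta> \<in> F" by (simp add: tr_def trace_def)

lemma tr_add: "tr (\<beta> + \<gamma>) = tr \<beta> + tr \<gamma>"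
  by (simp add: tr_def trace_def frob sum.distrib poly_mod_add_left)

lemma tr_zero: "tr 0 = 0" by (simp add: tr_def trace_def zero_power)

lemma pow_2n: assumes "\<beta> \<in> F" shows "\<beta> ^ (2 ^ n) mod f = \<beta>"
proof (cases "\<beta> = 0")
  case True
  have "(0::bit poly) ^ (2 ^ n) = 0" by (rule zero_power) simp
  then show ?thesis using True by (metis mod_0)
next
  case False
  then obtain k where b: "\<beta> = X ^ k mod f" using F_pow assms by auto
  have s: "(2::nat) ^ n = Suc N" using Npos by linarith
  have e: "k * 2 ^ n = k + k * N" using s by (metis mult_Suc_right)
  have "\<beta> ^ (2 ^ n) mod f = (X ^ k) ^ (2 ^ n) mod f" unfolding b by (rule power_mod)
  also have "(X ^ k) ^ (2 ^ n) = X ^ (k + k * N) * 1" using e by (metis power_mult mult_1_right)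
  also have "(X ^ (k + k * N) * 1) mod f = X ^ k mod f" using Xshift[of k k 1] by simp
  finally show ?thesis using b by simp
qed
lemma tr_sq: assumes "\<beta> \<in> F" shows "(tr \<beta>) ^ 2 mod f = tr \<beta>"
proof -
  let ?T = "\<Sum>i<n. \<beta> ^ (2 ^ i)"
  have "(tr \<beta>) ^ 2 mod f = ?T ^ 2 mod f" by (simp add: tr_def trace_def power_mod)
  also have "?T ^ 2 = (\<Sum>i<n. \<beta> ^ (2 ^ Suc i))"
    by (simp add: frob_sum power_mult[symmetric] mult.commute)
  also have "(\<Sum>i<n. \<beta> ^ (2 ^ Suc i)) = ?T + \<beta> ^ (2 ^ n) - \<beta>"
  proof -
    have a: "(\<Sum>i<Suc n. \<beta> ^ (2 ^ i)) = \<beta> ^ (2 ^ 0) + (\<Sum>i<n. \<beta> ^ (2 ^ Suc i))"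
      by (rule sum.lessThan_Suc_shift)
    have b: "(\<Sum>i<Suc n. \<beta> ^ (2 ^ i)) = ?T + \<beta> ^ (2 ^ n)"
      by (rule sum.lessThan_Suc)
    show ?thesis using a b by (simp add: algebra_simps)
  qed
  finally have "(tr \<beta>) ^ 2 mod f = (?T + \<beta> ^ (2 ^ n) - \<beta>) mod f" .
  also have "\<dots> = ?T mod f + \<beta> ^ (2 ^ n) mod f - \<beta> mod f"
    by (simp add: poly_mod_add_left poly_mod_diff_left)
  also have "\<dots> = ?T mod f" using pow_2n[OF assms] assms by (simp add: F_iff)
  finally show ?thesis by (simp add: tr_def trace_def)
qed

end

context prim begin
lemma sq_idem: assumes tF: "t \<in> F" and sq: "t ^ 2 mod f = t" shows "t = 0 \<or> t = 1"
proof (cases "t = 0")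
  case True then show ?thesis by simp
next
  case False
  then obtain e where e1: "e < N" and e2: "t = X ^ e mod f" using F_pow tF by blast
  have p1: "t ^ 2 mod f = (X ^ e) ^ 2 mod f" unfolding e2 by (rule power_mod)
  have p2: "(X ^ e) ^ 2 = X ^ (2 * e)" by (metis power_mult mult.commute)
  have a: "X ^ (2 * e) mod f = X ^ e mod f" using sq p1 p2 e2 by metis
  have m1: "X ^ (2 * e) * X ^ (N - e) mod f = X ^ e * X ^ (N - e) mod f"
    using a by (metis mod_mult_left_eq)
  have ex: "2 * e + (N - e) = e + 1 * N" using e1 by simp
  have m2: "X ^ (2 * e) * X ^ (N - e) = X ^ (e + 1 * N) * 1"
    by (metis power_add ex mult_1_right)
  have ex2: "e + (N - e) = N" using e1 by simp
  have m3: "X ^ e * X ^ (N - e) = X ^ N" by (metis power_add ex2)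
  have "X ^ (e + 1 * N) * 1 mod f = X ^ e * 1 mod f" by (rule Xshift)
  then have "X ^ e mod f = 1" using m1 m2 m3 XN by simp
  then have "t = 1" using e2 by simp
  then show ?thesis by simp
qed

lemma tr_01: assumes "\<beta> \<in> F" shows "tr \<beta> = 0 \<or> tr \<beta> = 1"
  using sq_idem[OF tr_F tr_sq[OF assms]] .
end



lemma pref_len[simp]: "length (pref w k) = k" by (simp add: pref_def)

lemma pref_nth: "i < k \<Longrightarrow> pref w k ! i = w i" by (simp add: pref_def)

lemma take_pref: "k \<le> K \<Longrightarrow> take k (pref w K) = pref w k"
  by (simp add: pref_def take_map)

lemma pref_split: "k \<le> K \<Longrightarrow> pref w K = pref w k @ map w [k..<K]"
  unfolding pref_def by (metis le_add_diff_inverse map_append upt_add_eq_append zero_le)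

lemma pref_eq_le: "pref w K = pref w' K \<Longrightarrow> k \<le> K \<Longrightarrow> pref w k = pref w' k"
  by (metis take_pref)

lemma pref_eq_all: "(\<And>K. pref w K = pref w' K) \<Longrightarrow> w = w'"
proof (rule ext)
  fix i assume "\<And>K. pref w K = pref w' K"
  then have "pref w (Suc i) ! i = pref w' (Suc i) ! i" by simp
  then show "w i = w' i" by (simp add: pref_nth)
qed

lemma cyl_iff: "w \<in> cyl u \<longleftrightarrow> pref w (length u) = u"
proof
  assume "w \<in> cyl u"
  then obtain v where "w = conc u v" by (auto simp: cyl_def)
  then show "pref w (length u) = u"
    by (intro nth_equalityI) (auto simp: pref_nth conc_def)
next
  assume a: "pref w (length u) = u"
  have "w = conc u (sfx (length u) w)"
  proof (rule ext)
    fix k show "w k = conc u (sfx (length u) w) k"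
    proof (cases "k < length u")
      case True then show ?thesis using a pref_nth[OF True, of w] by (simp add: conc_def)
    next
      case False then show ?thesis by (simp add: conc_def sfx_def)
    qed
  qed
  then show "w \<in> cyl u" by (auto simp: cyl_def)
qed

lemma cyl_conc: "w \<in> cyl u \<Longrightarrow> w = conc u (sfx (length u) w)"
proof (rule ext)
  fix k assume a: "w \<in> cyl u"
  then have a: "pref w (length u) = u" by (simp add: cyl_iff)
  show "w k = conc u (sfx (length u) w) k"
  proof (cases "k < length u")
    case True then show ?thesis using a pref_nth[OF True, of w] by (simp add: conc_def)
  next
    case False then show ?thesis by (simp add: conc_def sfx_def)
  qed
qed

lemma conc_cyl: "conc u v \<in> cyl u" by (auto simp: cyl_def)

lemma pref_conc_le: "k \<le> length u \<Longrightarrow> pref (conc u v) k = take k u"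
  by (intro nth_equalityI) (auto simp: pref_nth conc_def)

lemma pref_conc_ge: "pref (conc u v) (length u + d) = u @ pref v d"
  by (intro nth_equalityI) (auto simp: pref_nth conc_def nth_append)

lemma in_cyl_pref: "w \<in> cyl (pref w K)" by (simp add: cyl_iff)

lemma cyl_sub: assumes "w \<in> cyl \<mu>" "length \<mu> \<le> K" shows "cyl (pref w K) \<subseteq> cyl \<mu>"
proof
  fix x assume "x \<in> cyl (pref w K)"
  then have "pref x K = pref w K" by (simp add: cyl_iff)
  then have "pref x (length \<mu>) = pref w (length \<mu>)" using pref_eq_le assms(2) by blast
  then show "x \<in> cyl \<mu>" using assms(1) by (simp add: cyl_iff)
qed

lemma cantor_open_cyl: "cantor_open (cyl u)"
  unfolding cantor_open_def
proof
  fix w assume "w \<in> cyl u"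
  then have "cyl (pref w (length u)) = cyl u" by (simp add: cyl_iff)
  then show "\<exists>k. cyl (pref w k) \<subseteq> cyl u" by blast
qed

lemma pref_ones: "pref ones k = replicate k True"
  by (intro nth_equalityI) (auto simp: pref_nth ones_def)

definition P :: "nat \<Rightarrow> iword \<Rightarrow> iword" where
  "P j v = conc (replicate j True @ [False]) v"

lemma pref_P_le: "K \<le> j \<Longrightarrow> pref (P j v) K = replicate K True"
  unfolding P_def by (subst pref_conc_le) auto

lemma pref_P_ge: "j + 2 \<le> k \<Longrightarrow> \<exists>r. pref (P j v) k = replicate j True @ False # v 0 # r"
proof -
  assume a: "j + 2 \<le> k"
  define d where "d = k - (j + 2)"
  have d: "k = length (replicate j True @ [False]) + Suc d" using a unfolding d_def by simp
  have "pref v (Suc d) = v 0 # pref (sfx 1 v) d"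
    by (intro nth_equalityI) (auto simp: pref_nth sfx_def nth_Cons split: nat.split)
  then show ?thesis unfolding P_def d pref_conc_ge by auto
qed

lemma P_cyl: "P j v \<in> cyl (replicate j True @ [False])" unfolding P_def by (rule conc_cyl)

lemma cyl_P: "w \<in> cyl (replicate j True @ [False]) \<Longrightarrow> \<exists>v. w = P j v"
  using cyl_conc unfolding P_def by blast

lemma pref_act: assumes "TA h" shows "pref (act_inf h w) t = h (pref w t)"
proof (rule nth_equalityI)
  show "length (pref (act_inf h w) t) = length (h (pref w t))" using TA_len[OF assms] by simp
next
  fix k assume "k < length (pref (act_inf h w) t)"
  then have k: "k < t" by simp
  have "pref w t = pref w (Suc k) @ map w [Suc k..<t]" using k by (simp add: pref_split)
  then have "h (pref w t) = h (pref w (Suc k)) @ restr h (pref w (Suc k)) (map w [Suc k..<t])"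
    using TA_app[OF assms] by metis
  then have "h (pref w t) ! k = h (pref w (Suc k)) ! k"
    using TA_len[OF assms, of "pref w (Suc k)"] by (simp add: nth_append)
  then show "pref (act_inf h w) t ! k = h (pref w t) ! k"
    using k by (simp add: pref_nth act_inf_def)
qed

context prim begin

definition tt :: "nat \<Rightarrow> bit poly \<Rightarrow> bit poly" where
  "tt j \<beta> = tr ((alpha_mult f ^^ j) \<beta>)"

lemma tt_01: "\<beta> \<in> F \<Longrightarrow> tt j \<beta> = 0 \<or> tt j \<beta> = 1"
  unfolding tt_def by (rule tr_01) (rule am_pow_F)

lemma zero_ne_one_bp: "(0::bit poly) \<noteq> 1" by simp

lemma iota_sum: "\<beta> \<in> F \<Longrightarrow> \<gamma> \<in> F \<Longrightarrow> iota f n \<beta> (iota f n \<gamma> w) = iota f n (\<beta> + \<gamma>) w"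
proof (induction w arbitrary: \<beta> \<gamma>)
  case Nil then show ?case by simp
next
  case (Cons x w)
  show ?case
  proof (cases x)
    case True
    have "iota f n (alpha_mult f \<beta>) (iota f n (alpha_mult f \<gamma>) w) = iota f n (alpha_mult f \<beta> + alpha_mult f \<gamma>) w"
      using Cons.IH am_F by blast
    then show ?thesis using True by (simp add: am_add)
  next
    case False
    have tb: "trace f n \<beta> = 0 \<or> trace f n \<beta> = 1" using tr_01[OF Cons.prems(1)] by (simp add: tr_def)
    have tg: "trace f n \<gamma> = 0 \<or> trace f n \<gamma> = 1" using tr_01[OF Cons.prems(2)] by (simp add: tr_def)
    have ts: "trace f n (\<beta> + \<gamma>) = trace f n \<beta> + trace f n \<gamma>" using tr_add by (simp add: tr_def)
    show ?thesis using False tb tg ts one_one_bp by (auto simp: a_act_inv)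
  qed
qed

lemma iota_zero: "iota f n 0 = id"
proof (rule ext)
  fix w show "iota f n 0 w = id w"
  proof (induction w)
    case Nil then show ?case by simp
  next
    case (Cons x w) then show ?case using tr_zero am_zero by (cases x) (auto simp: tr_def)
  qed
qed

lemma iota_ones: "iota f n \<beta> (replicate t True @ z) = replicate t True @ iota f n ((alpha_mult f ^^ t) \<beta>) z"
  by (induction t arbitrary: \<beta>) (auto simp: funpow_swap1)

lemma restr_ones: "restr (iota f n \<beta>) (replicate t True) = iota f n ((alpha_mult f ^^ t) \<beta>)"
  by (rule ext) (simp add: restr_def iota_ones)

lemma iota_p: "iota f n \<beta> (replicate j True @ False # z) =
   replicate j True @ False # (if tt j \<beta> = 1 then a_act z else z)"
  by (simp add: iota_ones tt_def tr_def)

lemma a_act_dead: "a_act (u @ False # c # z) = a_act (u @ [False, c]) @ z" by (cases u) auto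

lemma iota_dead: "iota f n \<beta> (u @ False # c # z) = iota f n \<beta> (u @ [False, c]) @ z"
proof (induction u arbitrary: \<beta>)
  case Nil then show ?case by simp
next
  case (Cons x u)
  show ?case
  proof (cases x)
    case True then show ?thesis using Cons.IH by simp
  next
    case False then show ?thesis by (simp add: a_act_dead[of u c z])
  qed
qed

lemma restr_dead: "restr (iota f n \<beta>) (u @ False # c # v) = id"
proof (rule ext)
  fix z
  have "iota f n \<beta> (u @ False # c # v @ z) = iota f n \<beta> (u @ [False, c]) @ v @ z"
    by (rule iota_dead)
  then show "restr (iota f n \<beta>) (u @ False # c # v) z = id z"
    by (simp add: restr_def)
qed

lemma iota_G: "\<beta> \<in> F \<Longrightarrow> iota f n \<beta> \<in> Ggroup f n" by (rule gen_iota)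

section \<open>Contraction\<close>

lemma restr_id: "restr id u = id" by (rule ext) (simp add: restr_def)

lemma restr_a: "restr a_act (x # u) = id" by (rule ext) (simp add: restr_def)

lemma contract: "g \<in> Ggroup f n \<Longrightarrow> \<forall>w. \<exists>T. \<forall>t\<ge>T. \<exists>\<beta>\<in>F. restr g (pref w t) = iota f n \<beta>"
proof (induction rule: Ggroup.induct)
  case gen_id
  then show ?case using restr_id iota_zero zero_F by metis
next
  case gen_a
  show ?case
  proof
    fix w show "\<exists>T. \<forall>t\<ge>T. \<exists>\<beta>\<in>F. restr a_act (pref w t) = iota f n \<beta>"
    proof (intro exI allI impI)
      fix t :: nat assume "1 \<le> t"
      then have "pref w t = pref w 1 @ map w [1..<t]" by (rule pref_split)
      moreover have "pref w 1 = [w 0]" by (simp add: pref_def)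
      ultimately have "pref w t = w 0 # map w [1..<t]" by simp
      then have "restr a_act (pref w t) = id" by (simp add: restr_a)
      then show "\<exists>\<beta>\<in>F. restr a_act (pref w t) = iota f n \<beta>" using iota_zero zero_F by metis
    qed
  qed
next
  case (gen_iota \<beta>)
  show ?case
  proof
    fix w
    show "\<exists>T. \<forall>t\<ge>T. \<exists>\<beta>'\<in>F. restr (iota f n \<beta>) (pref w t) = iota f n \<beta>'"
    proof (cases "w = ones")
      case True
      show ?thesis
      proof (intro exI allI impI)
        fix t :: nat
        show "\<exists>\<beta>'\<in>F. restr (iota f n \<beta>) (pref w t) = iota f n \<beta>'"
          using True pref_ones restr_ones am_pow_F[OF gen_iota] by metis
      qed
    next
      case False
      then obtain p where p: "\<not> w p" by (auto simp: ones_def)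
      show ?thesis
      proof (intro exI allI impI)
        fix t :: nat assume t: "p + 2 \<le> t"
        have "pref w t = pref w p @ map w [p..<t]" using t by (intro pref_split) simp
        also have "map w [p..<t] = w p # w (Suc p) # map w [Suc (Suc p)..<t]"
          using t by (simp add: upt_conv_Cons)
        finally have "pref w t = pref w p @ False # w (Suc p) # map w [Suc (Suc p)..<t]" using p by simp
        then have "restr (iota f n \<beta>) (pref w t) = id" by (simp add: restr_dead)
        then show "\<exists>\<beta>'\<in>F. restr (iota f n \<beta>) (pref w t) = iota f n \<beta>'" using iota_zero zero_F by metis
      qed
    qed
  qed
next
  case (gen_comp g h)
  have tg: "TA g" and th: "TA h" using gen_comp.hyps TA_G by auto
  show ?case
  proof
    fix w
    obtain T1 where T1: "\<forall>t\<ge>T1. \<exists>\<beta>\<in>F. restr h (pref w t) = iota f n \<beta>" using gen_comp.IH(2) by blast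
    obtain T2 where T2: "\<forall>t\<ge>T2. \<exists>\<beta>\<in>F. restr g (pref (act_inf h w) t) = iota f n \<beta>"
      using gen_comp.IH(1) by blast
    show "\<exists>T. \<forall>t\<ge>T. \<exists>\<beta>\<in>F. restr (g \<circ> h) (pref w t) = iota f n \<beta>"
    proof (intro exI allI impI)
      fix t assume t: "max T1 T2 \<le> t"
      obtain \<beta>1 where b1: "\<beta>1 \<in> F" "restr h (pref w t) = iota f n \<beta>1" using T1 t by auto
      obtain \<beta>2 where b2: "\<beta>2 \<in> F" "restr g (pref (act_inf h w) t) = iota f n \<beta>2" using T2 t by auto
      have "restr (g \<circ> h) (pref w t) = restr g (h (pref w t)) \<circ> restr h (pref w t)"
        by (rule restr_comp[OF tg th])
      also have "\<dots> = iota f n \<beta>2 \<circ> iota f n \<beta>1" using b1 b2 pref_act[OF th] by simp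
      also have "\<dots> = iota f n (\<beta>2 + \<beta>1)" using iota_sum b1 b2 by (simp add: fun_eq_iff)
      finally show "\<exists>\<beta>\<in>F. restr (g \<circ> h) (pref w t) = iota f n \<beta>" using add_F b1 b2 by blast
    qed
  qed
next
  case (gen_inv g)
  have tg: "TA g" using gen_inv.hyps TA_G by auto
  have bg: "bij g" using tg by (simp add: TA_def)
  show ?case
  proof
    fix w
    obtain T where T: "\<forall>t\<ge>T. \<exists>\<beta>\<in>F. restr g (pref (act_inf (inv g) w) t) = iota f n \<beta>"
      using gen_inv.IH by blast
    show "\<exists>T. \<forall>t\<ge>T. \<exists>\<beta>\<in>F. restr (inv g) (pref w t) = iota f n \<beta>"
    proof (intro exI allI impI)
      fix t assume t: "T \<le> t"
      define u where "u = pref w t"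
      define u' where "u' = inv g u"
      have pa: "pref (act_inf (inv g) w) t = u'" unfolding u'_def u_def by (rule pref_act[OF TA_inv[OF tg]])
      have "\<exists>\<beta>\<in>F. restr g (pref (act_inf (inv g) w) t) = iota f n \<beta>" using T t by blast
      then obtain \<beta> where b: "\<beta> \<in> F" "restr g u' = iota f n \<beta>" unfolding pa by blast
      have gu: "g u' = u" unfolding u'_def by (rule surj_f_inv_f[OF bij_is_surj[OF bg]])
      have lu: "length u' = length u" using TA_len[OF tg, of u'] gu by simp
      have "restr (inv g) u z = iota f n \<beta> z" for z
      proof -
        have "g (u' @ iota f n \<beta> z) = g u' @ restr g u' (iota f n \<beta> z)" by (rule TA_app[OF tg])
        also have "\<dots> = u @ z" using b gu iota_invol by simp
        finally have eq: "g (u' @ iota f n \<beta> z) = u @ z" .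
        have "inv g (g (u' @ iota f n \<beta> z)) = u' @ iota f n \<beta> z" by (rule inv_f_f[OF bij_is_inj[OF bg]])
        then have "inv g (u @ z) = u' @ iota f n \<beta> z" unfolding eq .
        then show ?thesis using lu by (simp add: restr_def)
      qed
      then show "\<exists>\<beta>\<in>F. restr (inv g) (pref w t) = iota f n \<beta>" using b u_def by blast
    qed
  qed
qed

end

section \<open>Germs\<close>

lemma valid_iff: "valid_rep f n (\<eta>, g, \<mu>, w) \<longleftrightarrow> g \<in> Ggroup f n \<and> w \<in> cyl \<mu>"
  by (simp add: valid_rep_def)

lemma germ_eq_iff: "germ_eq (\<eta>, g, \<mu>, w) (\<eta>', g', \<mu>', w') \<longleftrightarrow> w = w' \<and>
  (\<exists>k \<epsilon> \<epsilon>'. pref w k = \<mu> @ \<epsilon> \<and> pref w k = \<mu>' @ \<epsilon>' \<and> \<eta> @ g \<epsilon> = \<eta>' @ g' \<epsilon>' \<and> restr g \<epsilon> = restr g' \<epsilon>')"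
  by (simp add: germ_eq_def)

lemma germ_refl: "w \<in> cyl \<mu> \<Longrightarrow> germ_eq (\<eta>, g, \<mu>, w) (\<eta>, g, \<mu>, w)"
  unfolding germ_eq_iff by (rule conjI, simp, rule exI[of _ "length \<mu>"]) (auto simp: cyl_iff)

lemma germ_sym: "germ_eq r r' \<Longrightarrow> germ_eq r' r"
  unfolding germ_eq_def by (cases r; cases r') (auto, metis)

lemma germ_mono:
  assumes tg: "TA g" and tg': "TA g'"
    and e: "pref w k = \<mu> @ \<epsilon>" "pref w k = \<mu>' @ \<epsilon>'" "\<eta> @ g \<epsilon> = \<eta>' @ g' \<epsilon>'" "restr g \<epsilon> = restr g' \<epsilon>'"
    and kK: "k \<le> K"
  shows "\<exists>\<delta> \<delta>'. pref w K = \<mu> @ \<delta> \<and> pref w K = \<mu>' @ \<delta>' \<and> \<eta> @ g \<delta> = \<eta>' @ g' \<delta>' \<and> restr g \<delta> = restr g' \<delta>'"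
proof -
  define d where "d = map w [k..<K]"
  have s: "pref w K = pref w k @ d" unfolding d_def using kK by (rule pref_split)
  have "g (\<epsilon> @ d) = g \<epsilon> @ restr g \<epsilon> d" by (rule TA_app[OF tg])
  moreover have "g' (\<epsilon>' @ d) = g' \<epsilon>' @ restr g' \<epsilon>' d" by (rule TA_app[OF tg'])
  ultimately have "\<eta> @ g (\<epsilon> @ d) = \<eta>' @ g' (\<epsilon>' @ d)" using e by simp
  moreover have "restr g (\<epsilon> @ d) = restr g' (\<epsilon>' @ d)" using e(4) by (simp add: restr_app)
  moreover have "pref w K = \<mu> @ (\<epsilon> @ d)" "pref w K = \<mu>' @ (\<epsilon>' @ d)" using s e by simp_all
  ultimately show ?thesis by blast
qed

lemma germ_trans:
  assumes v1: "valid_rep f n r1" and v2: "valid_rep f n r2" and v3: "valid_rep f n r3"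
    and a: "germ_eq r1 r2" and b: "germ_eq r2 r3"
  shows "germ_eq r1 r3"
proof -
  obtain \<eta>1 g1 \<mu>1 w1 where r1: "r1 = (\<eta>1, g1, \<mu>1, w1)" by (cases r1) auto
  obtain \<eta>2 g2 \<mu>2 w2 where r2: "r2 = (\<eta>2, g2, \<mu>2, w2)" by (cases r2) auto
  obtain \<eta>3 g3 \<mu>3 w3 where r3: "r3 = (\<eta>3, g3, \<mu>3, w3)" by (cases r3) auto
  have t1: "TA g1" using v1 r1 by (auto simp: valid_iff intro: TA_G)
  have t2: "TA g2" using v2 r2 by (auto simp: valid_iff intro: TA_G)
  have t3: "TA g3" using v3 r3 by (auto simp: valid_iff intro: TA_G)
  from a obtain k1 \<epsilon>1 \<epsilon>2 where w12: "w1 = w2" and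
    A: "pref w1 k1 = \<mu>1 @ \<epsilon>1" "pref w1 k1 = \<mu>2 @ \<epsilon>2" "\<eta>1 @ g1 \<epsilon>1 = \<eta>2 @ g2 \<epsilon>2" "restr g1 \<epsilon>1 = restr g2 \<epsilon>2"
    unfolding r1 r2 germ_eq_iff by blast
  from b obtain k2 \<epsilon>2' \<epsilon>3 where w23: "w2 = w3" and
    B: "pref w2 k2 = \<mu>2 @ \<epsilon>2'" "pref w2 k2 = \<mu>3 @ \<epsilon>3" "\<eta>2 @ g2 \<epsilon>2' = \<eta>3 @ g3 \<epsilon>3" "restr g2 \<epsilon>2' = restr g3 \<epsilon>3"
    unfolding r2 r3 germ_eq_iff by blast
  define K where "K = max k1 k2"
  obtain \<delta>1 \<delta>2 where A': "pref w1 K = \<mu>1 @ \<delta>1" "pref w1 K = \<mu>2 @ \<delta>2" "\<eta>1 @ g1 \<delta>1 = \<eta>2 @ g2 \<delta>2" "restr g1 \<delta>1 = restr g2 \<delta>2"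
    using germ_mono[OF t1 t2 A, of K] unfolding K_def by auto
  obtain \<delta>2' \<delta>3 where B': "pref w2 K = \<mu>2 @ \<delta>2'" "pref w2 K = \<mu>3 @ \<delta>3" "\<eta>2 @ g2 \<delta>2' = \<eta>3 @ g3 \<delta>3" "restr g2 \<delta>2' = restr g3 \<delta>3"
    using germ_mono[OF t2 t3 B, of K] unfolding K_def by auto
  have "\<delta>2 = \<delta>2'" using A'(2) B'(1) w12 by simp
  then show ?thesis unfolding r1 r3 germ_eq_iff using A' B' w12 w23 by metis
qed

lemma germ_eq_germ:
  assumes v: "valid_rep f n r" and v': "valid_rep f n r'"
  shows "germ f n r = germ f n r' \<longleftrightarrow> germ_eq r r'"
proof
  assume e: "germ f n r = germ f n r'"
  have "r' \<in> germ f n r'" using v' germ_refl unfolding germ_def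
    by (cases r') (auto simp: valid_iff)
  then have "r' \<in> germ f n r" using e by simp
  then show "germ_eq r r'" by (simp add: germ_def)
next
  assume e: "germ_eq r r'"
  show "germ f n r = germ f n r'"
    unfolding germ_def using e germ_sym germ_trans v v' by blast
qed

lemma germ_mem: "valid_rep f n r \<Longrightarrow> r \<in> germ f n r"
  unfolding germ_def by (cases r) (auto simp: valid_iff intro: germ_refl)

lemma src_germ: assumes v: "valid_rep f n (\<eta>, g, \<mu>, w)" shows "src (germ f n (\<eta>, g, \<mu>, w)) = w"
proof -
  have "\<exists>r. r \<in> germ f n (\<eta>, g, \<mu>, w)" using germ_mem[OF v] by blast
  then have s: "(SOME r. r \<in> germ f n (\<eta>, g, \<mu>, w)) \<in> germ f n (\<eta>, g, \<mu>, w)" by (rule someI_ex)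
  obtain a b c d where abcd: "(SOME r. r \<in> germ f n (\<eta>, g, \<mu>, w)) = (a, b, c, d)" by (cases "(SOME r. r \<in> germ f n (\<eta>, g, \<mu>, w))") auto
  have s': "(a, b, c, d) \<in> germ f n (\<eta>, g, \<mu>, w)" using s abcd by simp
  have "d = w" using s' unfolding germ_def by (simp add: germ_eq_iff)
  then show ?thesis unfolding src_def abcd by simp
qed

lemma germ_src_eq: "valid_rep f n (\<eta>, g, \<mu>, w) \<Longrightarrow> valid_rep f n (\<eta>', g', \<mu>', w') \<Longrightarrow>
   germ f n (\<eta>, g, \<mu>, w) = germ f n (\<eta>', g', \<mu>', w') \<Longrightarrow> w = w'"
  by (metis src_germ)

section \<open>Topology\<close>

definition BS :: "bit poly \<Rightarrow> nat \<Rightarrow> bool list \<Rightarrow> (bool list \<Rightarrow> bool list) \<Rightarrow> bool list \<Rightarrow> iword set \<Rightarrow> rep set set" where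
  "BS f n \<eta> g \<mu> U = {germ f n (\<eta>, g, \<mu>, w) | w. w \<in> U}"

lemma BS_open: "g \<in> Ggroup f n \<Longrightarrow> U \<subseteq> cyl \<mu> \<Longrightarrow> cantor_open U \<Longrightarrow> openin (Gtop f n) (BS f n \<eta> g \<mu> U)"
  unfolding Gtop_def
  by (rule topology_generated_by_Basis) (unfold basic_sets_def BS_def, blast)

lemma BS_nbhd: "g \<in> Ggroup f n \<Longrightarrow> w \<in> cyl \<mu> \<Longrightarrow> length \<mu> \<le> K \<Longrightarrow> openin (Gtop f n) (BS f n \<eta> g \<mu> (cyl (pref w K)))"
proof -
  assume a: "g \<in> Ggroup f n" "w \<in> cyl \<mu>" "length \<mu> \<le> K"
  have "cyl (pref w K) \<subseteq> cyl \<mu>" using cyl_sub[OF a(2,3)] .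
  then show ?thesis using BS_open[OF a(1) _ cantor_open_cyl] by blast
qed

lemma topspace_germ: "x \<in> topspace (Gtop f n) \<Longrightarrow> \<exists>\<eta> g \<mu> w. valid_rep f n (\<eta>, g, \<mu>, w) \<and> x = germ f n (\<eta>, g, \<mu>, w)"
proof -
  assume "x \<in> topspace (Gtop f n)"
  then obtain \<eta> g \<mu> U w where "g \<in> Ggroup f n" "U \<subseteq> cyl \<mu>" "w \<in> U" "x = germ f n (\<eta>, g, \<mu>, w)"
    unfolding Gtop_def topology_generated_by_topspace basic_sets_def by blast
  then have "valid_rep f n (\<eta>, g, \<mu>, w) \<and> x = germ f n (\<eta>, g, \<mu>, w)" by (auto simp: valid_iff)
  then show ?thesis by blast
qed

lemma open_germ: "openin (Gtop f n) U \<Longrightarrow> x \<in> U \<Longrightarrow> \<exists>\<eta> g \<mu> w. valid_rep f n (\<eta>, g, \<mu>, w) \<and> x = germ f n (\<eta>, g, \<mu>, w)"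
  using openin_subset topspace_germ by blast

lemma L_open_gen:
  assumes "generate_topology_on (basic_sets f n) U"
  shows "\<forall>\<eta> g \<mu> w. valid_rep f n (\<eta>, g, \<mu>, w) \<longrightarrow> germ f n (\<eta>, g, \<mu>, w) \<in> U \<longrightarrow>
     (\<exists>K\<ge>length \<mu>. \<forall>w'. pref w' K = pref w K \<longrightarrow> germ f n (\<eta>, g, \<mu>, w') \<in> U)"
  using assms
proof (induction rule: generate_topology_on.induct)
  case Empty then show ?case by simp
next
  case (Int a b)
  show ?case
  proof (intro allI impI)
    fix \<eta> g \<mu> w assume v: "valid_rep f n (\<eta>, g, \<mu>, w)" and m: "germ f n (\<eta>, g, \<mu>, w) \<in> a \<inter> b"
    obtain K1 where K1: "K1 \<ge> length \<mu>" "\<forall>w'. pref w' K1 = pref w K1 \<longrightarrow> germ f n (\<eta>, g, \<mu>, w') \<in> a"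
      using Int.IH(1) v m by blast
    obtain K2 where K2: "\<forall>w'. pref w' K2 = pref w K2 \<longrightarrow> germ f n (\<eta>, g, \<mu>, w') \<in> b"
      using Int.IH(2) v m by blast
    show "\<exists>K\<ge>length \<mu>. \<forall>w'. pref w' K = pref w K \<longrightarrow> germ f n (\<eta>, g, \<mu>, w') \<in> a \<inter> b"
    proof (intro exI conjI allI impI)
      show "max K1 K2 \<ge> length \<mu>" using K1 by simp
    next
      fix w' assume "pref w' (max K1 K2) = pref w (max K1 K2)"
      then have "pref w' K1 = pref w K1" "pref w' K2 = pref w K2" using pref_eq_le by (metis max.cobounded1, metis max.cobounded2)
      then show "germ f n (\<eta>, g, \<mu>, w') \<in> a \<inter> b" using K1 K2 by blast
    qed
  qed
next
  case (UN K)
  show ?case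
  proof (intro allI impI)
    fix \<eta> g \<mu> w assume v: "valid_rep f n (\<eta>, g, \<mu>, w)" and m: "germ f n (\<eta>, g, \<mu>, w) \<in> \<Union>K"
    then obtain k where k: "k \<in> K" "germ f n (\<eta>, g, \<mu>, w) \<in> k" by blast
    then obtain K0 where "K0 \<ge> length \<mu>" "\<forall>w'. pref w' K0 = pref w K0 \<longrightarrow> germ f n (\<eta>, g, \<mu>, w') \<in> k"
      using UN.IH v by blast
    then show "\<exists>K0\<ge>length \<mu>. \<forall>w'. pref w' K0 = pref w K0 \<longrightarrow> germ f n (\<eta>, g, \<mu>, w') \<in> \<Union>K"
      using k by blast
  qed
next
  case (Basis s)
  then obtain \<eta>' g' \<mu>' U' where s: "s = {germ f n (\<eta>', g', \<mu>', w) | w. w \<in> U'}"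
    and g': "g' \<in> Ggroup f n" and U': "U' \<subseteq> cyl \<mu>'" "cantor_open U'"
    unfolding basic_sets_def by blast
  show ?case
  proof (intro allI impI)
    fix \<eta> g \<mu> w assume v: "valid_rep f n (\<eta>, g, \<mu>, w)" and m: "germ f n (\<eta>, g, \<mu>, w) \<in> s"
    then obtain w0 where w0: "w0 \<in> U'" "germ f n (\<eta>, g, \<mu>, w) = germ f n (\<eta>', g', \<mu>', w0)"
      using s by blast
    have v0: "valid_rep f n (\<eta>', g', \<mu>', w0)" using w0 U' g' by (auto simp: valid_iff)
    have ge: "germ_eq (\<eta>, g, \<mu>, w) (\<eta>', g', \<mu>', w0)" using germ_eq_germ[OF v v0] w0 by simp
    then obtain k \<epsilon> \<epsilon>' where ww0: "w = w0" and
      E: "pref w k = \<mu> @ \<epsilon>" "pref w k = \<mu>' @ \<epsilon>'" "\<eta> @ g \<epsilon> = \<eta>' @ g' \<epsilon>'" "restr g \<epsilon> = restr g' \<epsilon>'"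
      unfolding germ_eq_iff by blast
    obtain k1 where k1: "cyl (pref w k1) \<subseteq> U'" using U'(2) w0(1) ww0 unfolding cantor_open_def by blast
    define K where "K = max (max k k1) (length \<mu>)"
    show "\<exists>K\<ge>length \<mu>. \<forall>w'. pref w' K = pref w K \<longrightarrow> germ f n (\<eta>, g, \<mu>, w') \<in> s"
    proof (intro exI conjI allI impI)
      show "K \<ge> length \<mu>" unfolding K_def by simp
    next
      fix w' assume pw: "pref w' K = pref w K"
      have pk: "pref w' k = pref w k" using pref_eq_le[OF pw] unfolding K_def by simp
      have pk1: "pref w' k1 = pref w k1" using pref_eq_le[OF pw] unfolding K_def by simp
      have pm: "pref w' (length \<mu>) = pref w (length \<mu>)" using pref_eq_le[OF pw] unfolding K_def by simp
      have w'U: "w' \<in> U'" using k1 pk1 by (auto simp: cyl_iff)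
      have va: "valid_rep f n (\<eta>, g, \<mu>, w')" using v pm by (simp add: valid_iff cyl_iff)
      have vb: "valid_rep f n (\<eta>', g', \<mu>', w')" using g' U' w'U by (auto simp: valid_iff)
      have "pref w' k = \<mu> @ \<epsilon> \<and> pref w' k = \<mu>' @ \<epsilon>' \<and> \<eta> @ g \<epsilon> = \<eta>' @ g' \<epsilon>' \<and> restr g \<epsilon> = restr g' \<epsilon>'"
        using E pk by simp
      then have "germ_eq (\<eta>, g, \<mu>, w') (\<eta>', g', \<mu>', w')"
        unfolding germ_eq_iff by blast
      then have "germ f n (\<eta>, g, \<mu>, w') = germ f n (\<eta>', g', \<mu>', w')" using germ_eq_germ[OF va vb] by simp
      then show "germ f n (\<eta>, g, \<mu>, w') \<in> s" using s w'U by blast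
    qed
  qed
qed

lemma L_open:
  assumes "openin (Gtop f n) U" "valid_rep f n (\<eta>, g, \<mu>, w)" "germ f n (\<eta>, g, \<mu>, w) \<in> U"
  shows "\<exists>K\<ge>length \<mu>. \<forall>w'. pref w' K = pref w K \<longrightarrow> germ f n (\<eta>, g, \<mu>, w') \<in> U"
  using L_open_gen[OF assms(1)[unfolded Gtop_def openin_topology_generated_by_iff]] assms(2,3) by blast

lemma cluster:
  assumes c: "compactin TT B" and J: "infinite J" and x: "\<And>j. j \<in> J \<Longrightarrow> x j \<in> B"
  shows "\<exists>y\<in>B. \<forall>U. openin TT U \<longrightarrow> y \<in> U \<longrightarrow> infinite {j\<in>J. x j \<in> U}"
proof (rule ccontr)
  assume "\<not> ?thesis"
  then have nc: "\<forall>y\<in>B. \<exists>U. openin TT U \<and> y \<in> U \<and> finite {j\<in>J. x j \<in> U}" by blast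
  define \<U> where "\<U> = {U. openin TT U \<and> finite {j\<in>J. x j \<in> U}}"
  have "B \<subseteq> \<Union>\<U>" using nc unfolding \<U>_def by blast
  moreover have "\<forall>U\<in>\<U>. openin TT U" unfolding \<U>_def by blast
  ultimately obtain \<F> where F: "finite \<F>" "\<F> \<subseteq> \<U>" "B \<subseteq> \<Union>\<F>" using c unfolding compactin_def by meson
  have "J \<subseteq> (\<Union>U\<in>\<F>. {j\<in>J. x j \<in> U})" using F(3) x by blast
  moreover have "finite (\<Union>U\<in>\<F>. {j\<in>J. x j \<in> U})" using F(1,2) unfolding \<U>_def by blast
  ultimately show False using J finite_subset by blast
qed

lemma funpow_split1: "k \<le> j \<Longrightarrow> (g ^^ (j - k)) ((g ^^ k) x) = (g ^^ j) x"
  by (metis funpow_add comp_apply le_add_diff_inverse2)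

lemma funpow_split2: "k \<le> j \<Longrightarrow> (g ^^ k) ((g ^^ (j - k)) x) = (g ^^ j) x"
  by (metis funpow_add comp_apply le_add_diff_inverse)

context prim begin

definition y :: "bit poly \<Rightarrow> rep set" where
  "y \<beta> = germ f n ([], iota f n \<beta>, [], ones)"

definition xg :: "nat \<Rightarrow> bit poly \<Rightarrow> iword \<Rightarrow> rep set" where
  "xg j \<gamma> v = germ f n ([], iota f n \<gamma>, [], P j v)"

lemma cyl_Nil: "w \<in> cyl []" by (simp add: cyl_iff pref_def)

lemma valid_io: "\<beta> \<in> F \<Longrightarrow> valid_rep f n ([], iota f n \<beta>, [], w)"
  by (simp add: valid_iff cyl_Nil iota_G)

lemma tt_from_iota:
  assumes b: "\<beta> \<in> F" and g: "\<gamma> \<in> F"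
    and e: "iota f n \<beta> (replicate j True @ False # c # r) = iota f n \<gamma> (replicate j True @ False # c # r)"
  shows "tt j \<beta> = tt j \<gamma>"
proof -
  have "(if tt j \<beta> = 1 then a_act (c # r) else c # r) = (if tt j \<gamma> = 1 then a_act (c # r) else c # r)"
    using e by (simp add: iota_p)
  then have "(tt j \<beta> = 1) = (tt j \<gamma> = 1)" by (cases "tt j \<beta> = 1"; cases "tt j \<gamma> = 1") auto
  then show ?thesis using tt_01[OF b, of j] tt_01[OF g, of j] by auto
qed

lemma XE: assumes b: "\<beta> \<in> F" and g: "\<gamma> \<in> F"
  shows "xg j \<beta> v = xg j \<gamma> v \<longleftrightarrow> tt j \<beta> = tt j \<gamma>"
proof
  assume "xg j \<beta> v = xg j \<gamma> v"
  then have "germ_eq ([], iota f n \<beta>, [], P j v) ([], iota f n \<gamma>, [], P j v)"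
    unfolding xg_def using germ_eq_germ[OF valid_io[OF b] valid_io[OF g]] by simp
  then obtain k \<epsilon> \<epsilon>' where E: "pref (P j v) k = [] @ \<epsilon>" "pref (P j v) k = [] @ \<epsilon>'"
      "[] @ iota f n \<beta> \<epsilon> = [] @ iota f n \<gamma> \<epsilon>'" "restr (iota f n \<beta>) \<epsilon> = restr (iota f n \<gamma>) \<epsilon>'"
    unfolding germ_eq_iff by blast
  obtain \<delta> \<delta>' where D: "pref (P j v) (max k (j + 2)) = [] @ \<delta>" "pref (P j v) (max k (j + 2)) = [] @ \<delta>'"
      "[] @ iota f n \<beta> \<delta> = [] @ iota f n \<gamma> \<delta>'"
    using germ_mono[OF TA_iota TA_iota E, of "max k (j + 2)"] by auto
  obtain r where r: "pref (P j v) (max k (j + 2)) = replicate j True @ False # v 0 # r"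
    using pref_P_ge[of j "max k (j + 2)" v] by auto
  have "iota f n \<beta> (replicate j True @ False # v 0 # r) = iota f n \<gamma> (replicate j True @ False # v 0 # r)"
    using D r by simp
  then show "tt j \<beta> = tt j \<gamma>" by (rule tt_from_iota[OF b g])
next
  assume t: "tt j \<beta> = tt j \<gamma>"
  obtain r where r: "pref (P j v) (j + 2) = replicate j True @ False # v 0 # r"
    using pref_P_ge[of j "j + 2" v] by auto
  define \<epsilon> where "\<epsilon> = replicate j True @ False # v 0 # r"
  have "iota f n \<beta> \<epsilon> = iota f n \<gamma> \<epsilon>" unfolding \<epsilon>_def using t by (simp add: iota_p)
  moreover have "restr (iota f n \<beta>) \<epsilon> = restr (iota f n \<gamma>) \<epsilon>" unfolding \<epsilon>_def by (simp add: restr_dead)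
  ultimately have "germ_eq ([], iota f n \<beta>, [], P j v) ([], iota f n \<gamma>, [], P j v)"
    unfolding germ_eq_iff using r \<epsilon>_def by (intro conjI refl exI[of _ "j + 2"] exI[of _ \<epsilon>]) auto
  then show "xg j \<beta> v = xg j \<gamma> v"
    unfolding xg_def using germ_eq_germ[OF valid_io[OF b] valid_io[OF g]] by simp
qed

lemma YE: assumes b: "\<beta> \<in> F" and g: "\<gamma> \<in> F" and e: "y \<beta> = y \<gamma>"
  shows "\<exists>k. \<forall>j\<ge>k. tt j \<beta> = tt j \<gamma>"
proof -
  have "germ_eq ([], iota f n \<beta>, [], ones) ([], iota f n \<gamma>, [], ones)"
    using e unfolding y_def using germ_eq_germ[OF valid_io[OF b] valid_io[OF g]] by simp
  then obtain k \<epsilon> \<epsilon>' where E: "pref ones k = [] @ \<epsilon>" "pref ones k = [] @ \<epsilon>'"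
      "restr (iota f n \<beta>) \<epsilon> = restr (iota f n \<gamma>) \<epsilon>'"
    unfolding germ_eq_iff by blast
  then have "restr (iota f n \<beta>) (replicate k True) = restr (iota f n \<gamma>) (replicate k True)"
    by (simp add: pref_ones)
  then have I: "iota f n ((alpha_mult f ^^ k) \<beta>) = iota f n ((alpha_mult f ^^ k) \<gamma>)" by (simp add: restr_ones)
  have "tt j \<beta> = tt j \<gamma>" if j: "j \<ge> k" for j
  proof -
    have "tt (j - k) ((alpha_mult f ^^ k) \<beta>) = tt (j - k) ((alpha_mult f ^^ k) \<gamma>)"
      by (rule tt_from_iota[OF am_pow_F[OF b] am_pow_F[OF g], where j="j - k" and c=False and r="[]"]) (simp add: I)
    moreover have "(alpha_mult f ^^ (j - k)) ((alpha_mult f ^^ k) x) = (alpha_mult f ^^ j) x" for x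
      using j by (rule funpow_split1)
    ultimately show ?thesis by (simp add: tt_def)
  qed
  then show ?thesis by blast
qed

lemma freq_seq: assumes "\<not> (\<exists>J. \<forall>j\<ge>J. Q j)"
  shows "\<exists>jj. \<forall>k. jj k \<ge> k \<and> \<not> Q (jj k)"
proof -
  have "\<forall>k. \<exists>j. j \<ge> k \<and> \<not> Q j" using assms by blast
  then show ?thesis by metis
qed

lemma infinite_ge: "infinite (A :: nat set) \<Longrightarrow> \<exists>k\<in>A. k \<ge> K"
  using infinite_nat_iff_unbounded_le by blast

lemma main_K:
  assumes c: "compactin (Gtop f n) B" and o: "openin (Gtop f n) B" and g: "\<gamma> \<in> F"
  shows "\<exists>J. \<forall>j\<ge>J. \<forall>v. xg j \<gamma> v \<in> B \<longleftrightarrow> (\<exists>\<beta>\<in>F. y \<beta> \<in> B \<and> tt j \<beta> = tt j \<gamma>)"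
proof -
  define S where "S = {\<beta>\<in>F. y \<beta> \<in> B}"
  have finS: "finite S" unfolding S_def using F_finite by simp
  have A1: "\<forall>\<beta>\<in>S. eventually (\<lambda>j. \<forall>v. xg j \<beta> v \<in> B) sequentially"
  proof
    fix \<beta> assume "\<beta> \<in> S"
    then have b: "\<beta> \<in> F" "y \<beta> \<in> B" unfolding S_def by auto
    obtain K where K: "\<forall>w'. pref w' K = pref ones K \<longrightarrow> germ f n ([], iota f n \<beta>, [], w') \<in> B"
      using L_open[OF o valid_io[OF b(1)]] b(2) unfolding y_def by blast
    have "\<forall>j\<ge>K. \<forall>v. xg j \<beta> v \<in> B"
    proof (intro allI impI)
      fix j v assume "K \<le> j"
      then have "pref (P j v) K = pref ones K" by (simp add: pref_P_le pref_ones)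
      then show "xg j \<beta> v \<in> B" using K unfolding xg_def by blast
    qed
    then show "eventually (\<lambda>j. \<forall>v. xg j \<beta> v \<in> B) sequentially" unfolding eventually_sequentially by blast
  qed
  then have "eventually (\<lambda>j. \<forall>\<beta>\<in>S. \<forall>v. xg j \<beta> v \<in> B) sequentially"
    by (rule eventually_ball_finite[OF finS])
  then obtain J1 where J1: "\<forall>j\<ge>J1. \<forall>\<beta>\<in>S. \<forall>v. xg j \<beta> v \<in> B" unfolding eventually_sequentially by blast
  define R where "R j \<longleftrightarrow> (\<exists>\<beta>\<in>F. y \<beta> \<in> B \<and> tt j \<beta> = tt j \<gamma>)" for j
  have part1: "\<forall>j\<ge>J1. \<forall>v. R j \<longrightarrow> xg j \<gamma> v \<in> B"
  proof (intro allI impI)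
    fix j v assume j: "J1 \<le> j" and "R j"
    then obtain \<beta> where b: "\<beta> \<in> F" "y \<beta> \<in> B" "tt j \<beta> = tt j \<gamma>" unfolding R_def by blast
    then have "xg j \<beta> v \<in> B" using J1 j unfolding S_def by blast
    moreover have "xg j \<beta> v = xg j \<gamma> v" using XE[OF b(1) g] b(3) by simp
    ultimately show "xg j \<gamma> v \<in> B" by simp
  qed
  have part2: "\<exists>J. \<forall>j\<ge>J. \<forall>v. xg j \<gamma> v \<in> B \<longrightarrow> R j"
  proof (rule ccontr)
    assume na: "\<not> ?thesis"
    obtain jj where jj: "\<forall>k. jj k \<ge> k \<and> \<not> (\<forall>v. xg (jj k) \<gamma> v \<in> B \<longrightarrow> R (jj k))"
      using freq_seq[OF na] by blast
    then have "\<forall>k. \<exists>v. xg (jj k) \<gamma> v \<in> B \<and> \<not> R (jj k)" by blast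
    then obtain vv where vv: "\<forall>k. xg (jj k) \<gamma> (vv k) \<in> B \<and> \<not> R (jj k)" by metis
    define x where "x k = xg (jj k) \<gamma> (vv k)" for k
    have jjk: "jj k \<ge> k" for k using jj by blast
    obtain y0 where y0: "y0 \<in> B" and clu: "\<forall>U. openin (Gtop f n) U \<longrightarrow> y0 \<in> U \<longrightarrow> infinite {k\<in>UNIV. x k \<in> U}"
      using cluster[OF c, of UNIV x] vv unfolding x_def by auto
    have clu2: "\<exists>k\<ge>K. x k \<in> U" if "openin (Gtop f n) U" "y0 \<in> U" for U K
      using infinite_ge[OF clu[rule_format, OF that]] by auto
    have "y0 \<in> topspace (Gtop f n)" using y0 c compactin_subset_topspace by blast
    then obtain \<eta> g0 \<mu> w where v0: "valid_rep f n (\<eta>, g0, \<mu>, w)" and y0e: "y0 = germ f n (\<eta>, g0, \<mu>, w)"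
      using topspace_germ by blast
    have g0G: "g0 \<in> Ggroup f n" and wmu: "w \<in> cyl \<mu>" using v0 by (auto simp: valid_iff)
    have tg0: "TA g0" using g0G by (rule TA_G)
    have nb: "\<exists>k\<ge>K'. \<exists>w''. x k = germ f n (\<eta>, g0, \<mu>, w'') \<and> w'' \<in> cyl (pref w K') \<and> w'' = P (jj k) (vv k)"
      if K': "length \<mu> \<le> K'" for K'
    proof -
      have op: "openin (Gtop f n) (BS f n \<eta> g0 \<mu> (cyl (pref w K')))" by (rule BS_nbhd[OF g0G wmu K'])
      have "y0 \<in> BS f n \<eta> g0 \<mu> (cyl (pref w K'))" unfolding BS_def y0e using in_cyl_pref by blast
      then obtain k where k: "k \<ge> K'" "x k \<in> BS f n \<eta> g0 \<mu> (cyl (pref w K'))" using clu2[OF op] by blast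
      then obtain w'' where w'': "w'' \<in> cyl (pref w K')" "x k = germ f n (\<eta>, g0, \<mu>, w'')" unfolding BS_def by blast
      have va: "valid_rep f n (\<eta>, g0, \<mu>, w'')" using w''(1) cyl_sub[OF wmu K'] g0G by (auto simp: valid_iff)
      have "germ f n ([], iota f n \<gamma>, [], P (jj k) (vv k)) = germ f n (\<eta>, g0, \<mu>, w'')"
        using w''(2) unfolding x_def xg_def .
      then have "P (jj k) (vv k) = w''" by (rule germ_src_eq[OF valid_io[OF g] va])
      then show ?thesis using k w'' by blast
    qed
    have wo: "w = ones"
    proof (rule pref_eq_all)
      fix K
      define K' where "K' = max K (length \<mu>)"
      obtain k w'' where k: "k \<ge> K'" "w'' \<in> cyl (pref w K')" "w'' = P (jj k) (vv k)"
        using nb[of K'] unfolding K'_def by auto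
      have "pref w K' = pref w'' K'" using k(2) by (simp add: cyl_iff)
      also have "\<dots> = replicate K' True" using k(1,3) jjk[of k] by (simp add: pref_P_le)
      finally have "pref w K' = pref ones K'" by (simp add: pref_ones)
      moreover have "K \<le> K'" unfolding K'_def by simp
      ultimately show "pref w K = pref ones K" by (rule pref_eq_le)
    qed
    \<comment> \<open>B2: y0 is some y beta\<close>
    obtain T where T: "\<forall>t\<ge>T. \<exists>\<beta>\<in>F. restr g0 (pref ones t) = iota f n \<beta>"
      using contract[OF g0G] by blast
    define m where "m = length \<mu>"
    obtain k w'' where k: "k \<ge> m + T" "w'' \<in> cyl (pref w (m + T))" "w'' = P (jj k) (vv k)"
        "x k = germ f n (\<eta>, g0, \<mu>, w'')"
      using nb[of "m + T"] unfolding m_def by auto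
    define j where "j = jj k"
    define v where "v = vv k"
    have jge: "j \<ge> m + T" using k(1) jjk[of k] unfolding j_def by simp
    have va: "valid_rep f n (\<eta>, g0, \<mu>, P j v)" using k(2,3) cyl_sub[OF wmu, of "m + T"] g0G
      unfolding j_def v_def m_def by (auto simp: valid_iff)
    have "germ f n ([], iota f n \<gamma>, [], P j v) = germ f n (\<eta>, g0, \<mu>, P j v)"
      using k(3,4) unfolding x_def xg_def j_def v_def by simp
    then have e1: "germ f n (\<eta>, g0, \<mu>, P j v) = germ f n ([], iota f n \<gamma>, [], P j v)" by (rule sym)
    have "germ_eq (\<eta>, g0, \<mu>, P j v) ([], iota f n \<gamma>, [], P j v)"
      using germ_eq_germ[OF va valid_io[OF g, of "P j v"]] e1 by simp
    then obtain k0 \<epsilon> \<epsilon>' where E: "pref (P j v) k0 = \<mu> @ \<epsilon>" "pref (P j v) k0 = [] @ \<epsilon>'"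
        "\<eta> @ g0 \<epsilon> = [] @ iota f n \<gamma> \<epsilon>'" "restr g0 \<epsilon> = restr (iota f n \<gamma>) \<epsilon>'"
      unfolding germ_eq_iff by blast
    define K1 where "K1 = max k0 j"
    obtain \<delta> \<delta>' where D: "pref (P j v) K1 = \<mu> @ \<delta>" "pref (P j v) K1 = [] @ \<delta>'"
        "\<eta> @ g0 \<delta> = [] @ iota f n \<gamma> \<delta>'"
      using germ_mono[OF tg0 TA_iota E, of K1] unfolding K1_def by auto
    have jK1: "j \<le> K1" unfolding K1_def by simp
    have mj: "m \<le> j" using jge by simp
    have tj: "take j \<delta>' = replicate j True"
      using D(2) take_pref[OF jK1, of "P j v"] pref_P_le[of j j v] by simp
    have mu: "\<mu> = replicate m True"
    proof -
      have "take m (pref (P j v) K1) = pref (P j v) m" using mj jK1 by (simp add: take_pref)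
      then show ?thesis using D(1) pref_P_le[OF mj, of v] m_def by simp
    qed
    have dd: "\<delta>' = \<mu> @ \<delta>" using D by simp
    have td: "take (j - m) \<delta> = replicate (j - m) True"
    proof -
      have "take j (\<mu> @ \<delta>) = \<mu> @ take (j - m) \<delta>" using m_def mj by simp
      moreover have "replicate j True = replicate m True @ replicate (j - m) True"
        using mj by (metis le_add_diff_inverse replicate_add)
      ultimately show ?thesis using tj dd mu by simp
    qed
    have l1: "length (iota f n \<gamma> \<delta>') = length \<delta>'" by simp
    have l2: "length (g0 \<delta>) = length \<delta>" using TA_len[OF tg0] .
    have "length (\<eta> @ g0 \<delta>) = length (iota f n \<gamma> \<delta>')" using D(3) by simp
    then have "length \<eta> + length \<delta> = length \<mu> + length \<delta>" using l1 l2 dd by simp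
    then have leta: "length \<eta> = m" unfolding m_def by simp
    have lt: "length (take j \<delta>') = j" using tj by (metis length_replicate)
    have "take (length (take j \<delta>')) (iota f n \<gamma> (take j \<delta>' @ drop j \<delta>')) = iota f n \<gamma> (take j \<delta>')"
      by (rule iota_take)
    then have "take j (iota f n \<gamma> \<delta>') = iota f n \<gamma> (take j \<delta>')" using lt by simp
    also have "\<dots> = replicate j True" using tj iota_ones[of _ j "[]"] by simp
    finally have A: "take j (\<eta> @ g0 \<delta>) = replicate j True" using D(3) by simp
    have "take (j - m) (g0 \<delta>) = g0 (take (j - m) \<delta>)"
    proof -
      have "\<delta> = take (j - m) \<delta> @ drop (j - m) \<delta>" by simp
      then have "g0 \<delta> = g0 (take (j - m) \<delta>) @ restr g0 (take (j - m) \<delta>) (drop (j - m) \<delta>)"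
        using TA_app[OF tg0] by metis
      moreover have "length (g0 (take (j - m) \<delta>)) = length (take (j - m) \<delta>)" by (rule TA_len[OF tg0])
      moreover have "length (take (j - m) \<delta>) = j - m" using td by (metis length_replicate)
      ultimately show ?thesis by simp
    qed
    then have "take j (\<eta> @ g0 \<delta>) = \<eta> @ g0 (replicate (j - m) True)" using leta td mj by simp
    then have B: "\<eta> @ g0 (replicate (j - m) True) = replicate m True @ replicate (j - m) True"
      using A mj by (simp add: replicate_add[symmetric])
    have "take m (\<eta> @ g0 (replicate (j - m) True)) = take m (replicate m True @ replicate (j - m) True)"
      using B by simp
    then have etam: "\<eta> = replicate m True" using leta by simp
    have gone: "g0 (replicate (j - m) True) = replicate (j - m) True" using B etam by simp
    have "j - m \<ge> T" using jge by simp
    then obtain \<beta>' where b': "\<beta>' \<in> F" "restr g0 (pref ones (j - m)) = iota f n \<beta>'"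
      using T by blast
    then have b': "\<beta>' \<in> F" "restr g0 (replicate (j - m) True) = iota f n \<beta>'" by (simp_all add: pref_ones)
    define \<beta> where "\<beta> = (alpha_mult f ^^ (Suc j * N - j)) \<beta>'"
    have bF: "\<beta> \<in> F" unfolding \<beta>_def by (rule am_pow_F[OF b'(1)])
    have ajb: "(alpha_mult f ^^ j) \<beta> = \<beta>'"
    proof -
      have "Suc j * 1 \<le> Suc j * N" using Npos by (rule mult_le_mono2)
      then have jle: "j \<le> Suc j * N" by simp
      have "(alpha_mult f ^^ j) \<beta> = (alpha_mult f ^^ (Suc j * N)) \<beta>'"
        unfolding \<beta>_def using jle by (rule funpow_split2)
      also have "\<dots> = (X ^ (0 + Suc j * N) * \<beta>') mod f" using am_pow[OF b'(1)] by simp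
      also have "\<dots> = (X ^ 0 * \<beta>') mod f" by (rule Xshift)
      also have "\<dots> = \<beta>'" using b'(1) by (simp add: F_iff)
      finally show ?thesis .
    qed
    have f1: "pref ones j = \<mu> @ replicate (j - m) True" using mu mj by (simp add: pref_ones replicate_add[symmetric])
    have f2: "pref ones j = [] @ replicate j True" by (simp add: pref_ones)
    have f3: "\<eta> @ g0 (replicate (j - m) True) = [] @ iota f n \<beta> (replicate j True)"
      using gone etam mj iota_ones[of \<beta> j "[]"] by (simp add: replicate_add[symmetric])
    have f4: "restr g0 (replicate (j - m) True) = restr (iota f n \<beta>) (replicate j True)"
      using b'(2) ajb by (simp add: restr_ones)
    have "germ_eq (\<eta>, g0, \<mu>, ones) ([], iota f n \<beta>, [], ones)"
      unfolding germ_eq_iff using f1 f2 f3 f4 by blast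
    moreover have v0': "valid_rep f n (\<eta>, g0, \<mu>, ones)" using v0 wo by simp
    ultimately have "y0 = y \<beta>" unfolding y0e y_def wo
      using germ_eq_germ[OF v0' valid_io[OF bF, of ones]] by simp
    then have yb: "y \<beta> \<in> B" using y0 by simp
    have op: "openin (Gtop f n) (BS f n [] (iota f n \<beta>) [] (cyl []))"
      by (rule BS_open[OF iota_G[OF bF] subset_refl cantor_open_cyl])
    have "y0 \<in> BS f n [] (iota f n \<beta>) [] (cyl [])" using \<open>y0 = y \<beta>\<close> unfolding y_def BS_def
      using cyl_Nil by blast
    then obtain k' where "x k' \<in> BS f n [] (iota f n \<beta>) [] (cyl [])" using clu2[OF op] by blast
    then obtain w2 where w2: "x k' = germ f n ([], iota f n \<beta>, [], w2)" unfolding BS_def by blast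
    have "P (jj k') (vv k') = w2"
      using w2 unfolding x_def xg_def by (rule germ_src_eq[OF valid_io[OF g] valid_io[OF bF]])
    then have "xg (jj k') \<gamma> (vv k') = xg (jj k') \<beta> (vv k')" using w2 unfolding x_def xg_def by simp
    then have "xg (jj k') \<beta> (vv k') = xg (jj k') \<gamma> (vv k')" by (rule sym)
    then have "tt (jj k') \<beta> = tt (jj k') \<gamma>" using XE[OF bF g] by blast
    then have "R (jj k')" unfolding R_def using bF yb by blast
    then show False using vv by blast
  qed
  then obtain J2 where J2: "\<forall>j\<ge>J2. \<forall>v. xg j \<gamma> v \<in> B \<longrightarrow> R j" by blast
  show ?thesis
  proof (intro exI allI impI)
    fix j v assume "max J1 J2 \<le> j"
    then show "xg j \<gamma> v \<in> B \<longleftrightarrow> (\<exists>\<beta>\<in>F. y \<beta> \<in> B \<and> tt j \<beta> = tt j \<gamma>)"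
      using part1 J2 unfolding R_def by auto
  qed
qed

end

context prim begin

lemma tt_period: assumes b: "\<beta> \<in> F" shows "tt (l + q * N) \<beta> = tt l \<beta>"
proof -
  have "(alpha_mult f ^^ (l + q * N)) \<beta> = (X ^ (l + q * N) * \<beta>) mod f" by (rule am_pow[OF b])
  also have "\<dots> = (X ^ l * \<beta>) mod f" by (rule Xshift)
  also have "\<dots> = (alpha_mult f ^^ l) \<beta>" by (rule am_pow[OF b, symmetric])
  finally show ?thesis by (simp add: tt_def)
qed

lemma tt_zero: "tt l 0 = 0"
proof -
  have "(alpha_mult f ^^ l) 0 = 0" using am_pow[OF zero_F, of l] by simp
  then show ?thesis by (simp add: tt_def tr_zero)
qed

lemma am_N: assumes b: "\<beta> \<in> F" shows "(alpha_mult f ^^ N) \<beta> = \<beta>"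
proof -
  have "(alpha_mult f ^^ N) \<beta> = (X ^ (0 + 1 * N) * \<beta>) mod f" using am_pow[OF b, of N] by simp
  also have "\<dots> = (X ^ 0 * \<beta>) mod f" by (rule Xshift)
  also have "\<dots> = \<beta>" using b by (simp add: F_iff)
  finally show ?thesis .
qed

lemma tt_inv: assumes b: "\<beta> \<in> F" and l: "l \<le> N" shows "tt l ((alpha_mult f ^^ (N - l)) \<beta>) = tr \<beta>"
proof -
  have "(alpha_mult f ^^ l) ((alpha_mult f ^^ (N - l)) \<beta>) = (alpha_mult f ^^ N) \<beta>"
    using l by (rule funpow_split2)
  then show ?thesis using am_N[OF b] by (simp add: tt_def)
qed

lemma iota_triv: assumes tz: "\<forall>\<gamma>\<in>F. tr \<gamma> = 0" and b: "\<beta> \<in> F" shows "iota f n \<beta> = id"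
proof (rule ext)
  fix w show "iota f n \<beta> w = id w"
    using b
  proof (induction w arbitrary: \<beta>)
    case Nil then show ?case by simp
  next
    case (Cons x w)
    have "trace f n \<beta> = 0" using tz Cons.prems by (simp add: tr_def)
    moreover have "iota f n (alpha_mult f \<beta>) w = w" using Cons.IH[OF am_F] by simp
    ultimately show ?case by (cases x) auto
  qed
qed

lemma shift_bij: assumes e: "e < N" shows "(\<lambda>l. (l + e) mod N) ` {..<N} = {..<N}"
proof
  show "(\<lambda>l. (l + e) mod N) ` {..<N} \<subseteq> {..<N}" using Npos by auto
next
  show "{..<N} \<subseteq> (\<lambda>l. (l + e) mod N) ` {..<N}"
  proof
    fix l' assume l': "l' \<in> {..<N}"
    define l where "l = (l' + (N - e)) mod N"
    have "(l + e) mod N = (l' + (N - e) + e) mod N" unfolding l_def by (simp add: mod_add_left_eq)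
    also have "l' + (N - e) + e = l' + N" using e by simp
    also have "(l' + N) mod N = l'" using l' by (metis mod_add_self2 mod_less lessThan_iff)
    finally have "(l + e) mod N = l'" .
    moreover have "l \<in> {..<N}" unfolding l_def using Npos by simp
    ultimately show "l' \<in> (\<lambda>l. (l + e) mod N) ` {..<N}" by (metis image_eqI)
  qed
qed

lemma card_shift: assumes e: "e < N"
  shows "card {l\<in>{..<N}. Q ((l + e) mod N)} = card {l\<in>{..<N}. Q l}"
proof -
  let ?s = "\<lambda>l. (l + e) mod N"
  have im: "?s ` {..<N} = {..<N}" by (rule shift_bij[OF e])
  have inj: "inj_on ?s {..<N}"
    using eq_card_imp_inj_on[of "{..<N}" ?s] im by simp
  have "?s ` {l\<in>{..<N}. Q (?s l)} = {l\<in>{..<N}. Q l}"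
    using shift_bij[OF e] by auto
  moreover have "card (?s ` {l\<in>{..<N}. Q (?s l)}) = card {l\<in>{..<N}. Q (?s l)}"
    by (rule card_image) (rule inj_on_subset[OF inj], auto)
  ultimately show ?thesis by simp
qed

lemma CNT: assumes b: "\<beta> \<in> F" "\<beta> \<noteq> 0"
  shows "card {l\<in>{..<N}. tt l \<beta> = 0} = card {l\<in>{..<N}. tr (X ^ l mod f) = 0}"
proof -
  obtain e where e: "e < N" "\<beta> = X ^ e mod f" using F_pow b by blast
  have "tt l \<beta> = tr (X ^ ((l + e) mod N) * 1 mod f)" for l
  proof -
    have "(alpha_mult f ^^ l) \<beta> = (X ^ l * (X ^ e mod f)) mod f" using am_pow[OF b(1)] e(2) by simp
    also have "\<dots> = (X ^ (l + e) * 1) mod f" by (simp add: mod_mult_right_eq power_add)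
    also have "\<dots> = (X ^ ((l + e) mod N) * 1) mod f" by (rule Xmod)
    finally show ?thesis by (simp add: tt_def)
  qed
  then have "{l\<in>{..<N}. tt l \<beta> = 0} = {l\<in>{..<N}. (\<lambda>k. tr (X ^ k mod f) = 0) ((l + e) mod N)}" by simp
  then show ?thesis using card_shift[OF e(1), of "\<lambda>k. tr (X ^ k mod f) = 0"] by simp
qed

lemma sum_count: "(\<Sum>l<(N0::nat). (if Q l then 1 else 0 :: 'a::comm_semiring_1)) = of_nat (card {l\<in>{..<N0}. Q l})"
  using sum.inter_filter[of "{..<N0}" "\<lambda>_. (1::'a)" Q] by simp

end

context prim begin

lemma main_interior:
  fixes h :: "rep set \<Rightarrow> 'k::field_char_0"
  assumes hs: "h \<in> steinberg f n" and hz: "h (z_e f n) \<noteq> 0"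
  shows "Gtop f n interior_of supp f n h \<noteq> {}"
proof -
  obtain m and c :: "nat \<Rightarrow> 'k" and B where cob: "\<forall>i<m. compact_open_bisection f n (B i)"
    and hdef: "h = (\<lambda>x. \<Sum>i<m. c i * indicator (B i) x)"
    using hs unfolding steinberg_def by blast
  have cB1: "compactin (Gtop f n) (B i)" if "i < m" for i
    using cob that unfolding compact_open_bisection_def by auto
  have cB2: "openin (Gtop f n) (B i)" if "i < m" for i
    using cob that unfolding compact_open_bisection_def by auto
  have cB3: "inj_on src (B i)" if "i < m" for i
    using cob that unfolding compact_open_bisection_def by auto
  define S where "S i = {\<beta> \<in> F. y \<beta> \<in> B i}" for i
  have SF: "S i \<subseteq> F" for i unfolding S_def by auto
  have finS: "finite (S i)" for i using finite_subset[OF SF F_finite] .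
  have srcy: "src (y \<beta>) = ones" if "\<beta> \<in> F" for \<beta> unfolding y_def by (rule src_germ[OF valid_io[OF that]])
  have bis: "y \<beta> = y \<beta>'" if "i < m" "\<beta> \<in> S i" "\<beta>' \<in> S i" for i \<beta> \<beta>'
  proof -
    have m1: "y \<beta> \<in> B i" "y \<beta>' \<in> B i" and f1: "\<beta> \<in> F" "\<beta>' \<in> F" using that unfolding S_def by auto
    have "src (y \<beta>) = src (y \<beta>')" using srcy f1 by simp
    then show ?thesis by (rule inj_onD[OF cB3[OF that(1)] _ m1(1) m1(2)])
  qed
  define b where "b i = (if 0 \<in> S i then 0 else (SOME \<beta>. \<beta> \<in> S i))" for i
  have bS: "b i \<in> S i" if "S i \<noteq> {}" for i
  proof (cases "0 \<in> S i")
    case True then show ?thesis unfolding b_def by simp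
  next
    case False
    have "\<exists>\<beta>. \<beta> \<in> S i" using that by blast
    then have "(SOME \<beta>. \<beta> \<in> S i) \<in> S i" by (rule someI_ex)
    then show ?thesis unfolding b_def using False by simp
  qed
  define I where "I = {i \<in> {..<m}. S i \<noteq> {}}"
  define I0 where "I0 = {i \<in> {..<m}. 0 \<in> S i}"
  have I0I: "I0 \<subseteq> I" unfolding I0_def I_def by auto
  have finI: "finite I" unfolding I_def by simp
  have b0: "b i = 0" if "i \<in> I0" for i using that unfolding b_def I0_def by simp
  have bF: "b i \<in> F" if "i \<in> I" for i using bS SF that unfolding I_def by blast
  have bnz: "b i \<noteq> 0" if "i \<in> I - I0" for i
  proof -
    have "b i \<in> S i" using bS that unfolding I_def by blast
    moreover have "0 \<notin> S i" using that unfolding I_def I0_def by blast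
    ultimately show ?thesis by auto
  qed
  have ze: "z_e f n = y 0" unfolding z_e_def y_def by (simp add: iota_zero)
  have hze: "h (z_e f n) = (\<Sum>i\<in>I0. c i)"
  proof -
    have "h (z_e f n) = (\<Sum>i<m. c i * indicator (B i) (y 0))" using ze hdef by simp
    also have "\<dots> = (\<Sum>i<m. if 0 \<in> S i then c i else 0)"
      by (rule sum.cong) (auto simp: S_def indicator_def)
    also have "\<dots> = (\<Sum>i\<in>I0. c i)" unfolding I0_def by (rule sum.inter_filter[symmetric]) simp
    finally show ?thesis .
  qed
  define H where "H j \<gamma> = (\<Sum>i\<in>I. c i * (if tt j (b i) = tt j \<gamma> then 1 else 0))" for j \<gamma>
  have EV: "\<exists>J. \<forall>j\<ge>J. \<forall>\<gamma>\<in>F. \<forall>v. h (xg j \<gamma> v) = H j \<gamma>"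
  proof -
    have "\<forall>i\<in>{..<m}. eventually (\<lambda>j. \<forall>\<gamma>\<in>F. \<forall>v. xg j \<gamma> v \<in> B i \<longleftrightarrow> (\<exists>\<beta>\<in>F. y \<beta> \<in> B i \<and> tt j \<beta> = tt j \<gamma>)) sequentially"
    proof
      fix i assume i: "i \<in> {..<m}"
      then have i': "i < m" by simp
      have "\<forall>\<gamma>\<in>F. eventually (\<lambda>j. \<forall>v. xg j \<gamma> v \<in> B i \<longleftrightarrow> (\<exists>\<beta>\<in>F. y \<beta> \<in> B i \<and> tt j \<beta> = tt j \<gamma>)) sequentially"
      proof
        fix \<gamma> assume g: "\<gamma> \<in> F"
        have "\<exists>J. \<forall>j\<ge>J. \<forall>v. xg j \<gamma> v \<in> B i \<longleftrightarrow> (\<exists>\<beta>\<in>F. y \<beta> \<in> B i \<and> tt j \<beta> = tt j \<gamma>)"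
          by (rule main_K[OF cB1[OF i'] cB2[OF i'] g])
        then show "eventually (\<lambda>j. \<forall>v. xg j \<gamma> v \<in> B i \<longleftrightarrow> (\<exists>\<beta>\<in>F. y \<beta> \<in> B i \<and> tt j \<beta> = tt j \<gamma>)) sequentially"
          unfolding eventually_sequentially .
      qed
      then show "eventually (\<lambda>j. \<forall>\<gamma>\<in>F. \<forall>v. xg j \<gamma> v \<in> B i \<longleftrightarrow> (\<exists>\<beta>\<in>F. y \<beta> \<in> B i \<and> tt j \<beta> = tt j \<gamma>)) sequentially"
        by (rule eventually_ball_finite[OF F_finite])
    qed
    then have E1: "eventually (\<lambda>j. \<forall>i\<in>{..<m}. \<forall>\<gamma>\<in>F. \<forall>v. xg j \<gamma> v \<in> B i \<longleftrightarrow> (\<exists>\<beta>\<in>F. y \<beta> \<in> B i \<and> tt j \<beta> = tt j \<gamma>)) sequentially"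
      by (rule eventually_ball_finite[OF finite_lessThan])
    have "\<forall>i\<in>{..<m}. eventually (\<lambda>j. \<forall>\<beta>\<in>S i. tt j \<beta> = tt j (b i)) sequentially"
    proof
      fix i assume i: "i \<in> {..<m}"
      have "\<forall>\<beta>\<in>S i. eventually (\<lambda>j. tt j \<beta> = tt j (b i)) sequentially"
      proof
        fix \<beta> assume bt: "\<beta> \<in> S i"
        then have bi: "b i \<in> S i" using bS by blast
        have ye: "y \<beta> = y (b i)" using bis[OF _ bt bi] i by simp
        have f1: "\<beta> \<in> F" "b i \<in> F" using SF bt bi by auto
        obtain k where "\<forall>j\<ge>k. tt j \<beta> = tt j (b i)" using YE[OF f1 ye] by blast
        then show "eventually (\<lambda>j. tt j \<beta> = tt j (b i)) sequentially" unfolding eventually_sequentially by blast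
      qed
      then show "eventually (\<lambda>j. \<forall>\<beta>\<in>S i. tt j \<beta> = tt j (b i)) sequentially"
        by (rule eventually_ball_finite[OF finS])
    qed
    then have E2: "eventually (\<lambda>j. \<forall>i\<in>{..<m}. \<forall>\<beta>\<in>S i. tt j \<beta> = tt j (b i)) sequentially"
      by (rule eventually_ball_finite[OF finite_lessThan])
    obtain J1 where J1: "\<forall>j\<ge>J1. \<forall>i\<in>{..<m}. \<forall>\<gamma>\<in>F. \<forall>v. xg j \<gamma> v \<in> B i \<longleftrightarrow> (\<exists>\<beta>\<in>F. y \<beta> \<in> B i \<and> tt j \<beta> = tt j \<gamma>)"
      using E1 unfolding eventually_sequentially by blast
    obtain J2 where J2: "\<forall>j\<ge>J2. \<forall>i\<in>{..<m}. \<forall>\<beta>\<in>S i. tt j \<beta> = tt j (b i)"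
      using E2 unfolding eventually_sequentially by blast
    define J where "J = max J1 J2"
    have "h (xg j \<gamma> v) = H j \<gamma>" if j: "j \<ge> J" and g: "\<gamma> \<in> F" for j \<gamma> v
    proof -
      have ind: "indicator (B i) (xg j \<gamma> v) = (if S i \<noteq> {} \<and> tt j (b i) = tt j \<gamma> then 1 else (0::'k))"
        if i: "i < m" for i
      proof -
        have j1: "J1 \<le> j" using j unfolding J_def by simp
        have "xg j \<gamma> v \<in> B i \<longleftrightarrow> (\<exists>\<beta>\<in>F. y \<beta> \<in> B i \<and> tt j \<beta> = tt j \<gamma>)"
          using J1[rule_format, OF j1 _ g, of i v] i by simp
        also have "\<dots> \<longleftrightarrow> (\<exists>\<beta>\<in>S i. tt j \<beta> = tt j \<gamma>)" unfolding S_def by blast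
        also have "\<dots> \<longleftrightarrow> (S i \<noteq> {} \<and> tt j (b i) = tt j \<gamma>)"
        proof
          assume "\<exists>\<beta>\<in>S i. tt j \<beta> = tt j \<gamma>"
          then obtain \<beta> where "\<beta> \<in> S i" "tt j \<beta> = tt j \<gamma>" by blast
          moreover have "tt j \<beta> = tt j (b i)"
          proof -
            have j2: "J2 \<le> j" using j unfolding J_def by simp
            show ?thesis using J2[rule_format, OF j2 _ \<open>\<beta> \<in> S i\<close>] i by simp
          qed
          ultimately show "S i \<noteq> {} \<and> tt j (b i) = tt j \<gamma>" by auto
        next
          assume "S i \<noteq> {} \<and> tt j (b i) = tt j \<gamma>"
          then show "\<exists>\<beta>\<in>S i. tt j \<beta> = tt j \<gamma>" using bS by blast
        qed
        finally show ?thesis by (simp add: indicator_def)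
      qed
      have "h (xg j \<gamma> v) = (\<Sum>i<m. c i * indicator (B i) (xg j \<gamma> v))" using hdef by simp
      also have "\<dots> = (\<Sum>i<m. if S i \<noteq> {} then c i * (if tt j (b i) = tt j \<gamma> then 1 else 0) else 0)"
        by (rule sum.cong) (simp_all add: ind)
      also have "\<dots> = H j \<gamma>" unfolding H_def I_def by (rule sum.inter_filter[symmetric]) simp
      finally show ?thesis .
    qed
    then show ?thesis by blast
  qed
  then obtain J where J: "\<forall>j\<ge>J. \<forall>\<gamma>\<in>F. \<forall>v. h (xg j \<gamma> v) = H j \<gamma>" by blast
  show ?thesis
  proof (cases "\<exists>j\<ge>J. \<exists>\<gamma>\<in>F. H j \<gamma> \<noteq> 0")
    case True
    then obtain j \<gamma> where j: "j \<ge> J" "\<gamma> \<in> F" "H j \<gamma> \<noteq> 0" by blast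
    define Ob where "Ob = BS f n [] (iota f n \<gamma>) [] (cyl (replicate j True @ [False]))"
    have op: "openin (Gtop f n) Ob" unfolding Ob_def
      by (rule BS_open[OF iota_G[OF j(2)] _ cantor_open_cyl]) (auto simp: cyl_Nil)
    have sub: "Ob \<subseteq> supp f n h"
    proof
      fix x assume "x \<in> Ob"
      then obtain w where w: "w \<in> cyl (replicate j True @ [False])" "x = germ f n ([], iota f n \<gamma>, [], w)"
        unfolding Ob_def BS_def by blast
      then obtain v where "w = P j v" using cyl_P by blast
      then have xe: "x = xg j \<gamma> v" using w unfolding xg_def by simp
      have "x \<in> Grpd f n" unfolding Grpd_def xe xg_def using valid_io[OF j(2)] by blast
      moreover have "h x \<noteq> 0" using J j xe by simp
      ultimately show "x \<in> supp f n h" unfolding supp_def by simp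
    qed
    have "xg j \<gamma> ones \<in> Ob" unfolding Ob_def BS_def xg_def using P_cyl by blast
    then have "Ob \<noteq> {}" by blast
    moreover have "Ob \<subseteq> Gtop f n interior_of supp f n h" by (rule interior_of_maximal[OF sub op])
    ultimately show ?thesis by blast
  next
    case False
    then have H0: "\<forall>j\<ge>J. \<forall>\<gamma>\<in>F. H j \<gamma> = 0" by blast
    show ?thesis
    proof (cases "\<forall>\<gamma>\<in>F. tr \<gamma> = 0")
      case True
      have yy: "y \<beta> = y 0" if "\<beta> \<in> F" for \<beta> unfolding y_def using iota_triv[OF True that] iota_zero by simp
      have II0: "I = I0"
      proof
        show "I \<subseteq> I0"
        proof
          fix i assume "i \<in> I"
          then obtain \<beta> where "i < m" "\<beta> \<in> S i" unfolding I_def by blast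
          then have m1: "y \<beta> \<in> B i" and bF': "\<beta> \<in> F" unfolding S_def by auto
          have "y 0 \<in> B i" using m1 unfolding yy[OF bF'] .
          then show "i \<in> I0" using \<open>i < m\<close> unfolding I0_def S_def by simp
        qed
      qed (rule I0I)
      have tt0: "tt j \<beta> = 0" if "\<beta> \<in> F" for j \<beta> using True am_pow_F[OF that] by (simp add: tt_def)
      have "H J 0 = (\<Sum>i\<in>I. c i)" unfolding H_def using tt0 bF by (intro sum.cong) simp_all
      then have "H J 0 = h (z_e f n)" using II0 hze by simp
      then show ?thesis using H0 hz by simp
    next
      case False
      then obtain \<gamma>0 where g0: "\<gamma>0 \<in> F" "tr \<gamma>0 = 1" using tr_01 by blast
      define j0 where "j0 = J * N"
      have j0J: "J \<le> j0" unfolding j0_def using Npos by simp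
      have tj: "tt (j0 + l) \<beta> = tt l \<beta>" if "\<beta> \<in> F" for l \<beta>
        using tt_period[OF that, of l J] unfolding j0_def by (simp add: add.commute)
      define A where "A l = (\<Sum>i\<in>I. c i * (if tt l (b i) = 0 then 1 else 0))" for l
      have A0: "A l = 0" for l
      proof -
        have "H (j0 + l) 0 = 0" using H0 j0J by simp
        moreover have "H (j0 + l) 0 = A l" unfolding H_def A_def
          by (rule sum.cong) (simp_all add: tj bF tt_zero)
        ultimately show ?thesis by simp
      qed
      have A1: "(\<Sum>i\<in>I. c i * (if tt l (b i) = 1 then 1 else 0)) = 0" if l: "l < N" for l
      proof -
        define \<gamma>l where "\<gamma>l = (alpha_mult f ^^ (N - l)) \<gamma>0"
        have glF: "\<gamma>l \<in> F" unfolding \<gamma>l_def by (rule am_pow_F[OF g0(1)])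
        have ttg: "tt l \<gamma>l = 1" unfolding \<gamma>l_def using tt_inv[OF g0(1)] l g0(2) by simp
        have "H (j0 + l) \<gamma>l = 0" using H0 j0J glF by simp
        moreover have "H (j0 + l) \<gamma>l = (\<Sum>i\<in>I. c i * (if tt l (b i) = 1 then 1 else 0))" unfolding H_def
          by (rule sum.cong) (simp_all add: tj bF glF ttg)
        ultimately show ?thesis by simp
      qed
      have D0: "(\<Sum>i\<in>I. c i) = 0"
      proof -
        have "(\<Sum>i\<in>I. c i) = (\<Sum>i\<in>I. c i * (if tt 0 (b i) = 0 then 1 else 0) + c i * (if tt 0 (b i) = 1 then 1 else 0))"
        proof (rule sum.cong)
          fix i assume "i \<in> I"
          then have "tt 0 (b i) = 0 \<or> tt 0 (b i) = 1" using tt_01 bF by blast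
          then show "c i = c i * (if tt 0 (b i) = 0 then 1 else 0) + c i * (if tt 0 (b i) = 1 then 1 else 0)"
            by auto
        qed simp
        also have "\<dots> = A 0 + (\<Sum>i\<in>I. c i * (if tt 0 (b i) = 1 then 1 else 0))"
          unfolding A_def by (rule sum.distrib)
        also have "\<dots> = 0" using A0[of 0] A1[of 0] Npos by simp
        finally show ?thesis .
      qed
      define C where "C = card {l\<in>{..<N}. tr (X ^ l mod f) = 0}"
      have cnt: "card {l\<in>{..<N}. tt l (b i) = 0} = (if i \<in> I0 then N else C)" if "i \<in> I" for i
      proof (cases "i \<in> I0")
        case True
        then show ?thesis using b0 tt_zero by simp
      next
        case False
        then show ?thesis using CNT[OF bF[OF that] bnz] that unfolding C_def by simp
      qed
      have "(\<Sum>l<N. A l) = (\<Sum>i\<in>I. c i * of_nat (card {l\<in>{..<N}. tt l (b i) = 0}))"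
      proof -
        have "(\<Sum>l<N. A l) = (\<Sum>i\<in>I. \<Sum>l<N. c i * (if tt l (b i) = 0 then 1 else 0))"
          unfolding A_def by (rule sum.swap)
        also have "\<dots> = (\<Sum>i\<in>I. c i * (\<Sum>l<N. (if tt l (b i) = 0 then 1 else 0)))"
          by (simp add: sum_distrib_left)
        also have "\<dots> = (\<Sum>i\<in>I. c i * of_nat (card {l\<in>{..<N}. tt l (b i) = 0}))"
          by (simp add: sum_count)
        finally show ?thesis .
      qed
      also have "\<dots> = (\<Sum>i\<in>I. c i * of_nat (if i \<in> I0 then N else C))"
      proof (rule sum.cong[OF refl])
        fix i assume "i \<in> I"
        then have "card {l\<in>{..<N}. tt l (b i) = 0} = (if i \<in> I0 then N else C)" by (rule cnt)
        then show "c i * of_nat (card {l\<in>{..<N}. tt l (b i) = 0}) = c i * of_nat (if i \<in> I0 then N else C)"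
          by (simp only:)
      qed
      also have "\<dots> = (\<Sum>i\<in>I - I0. c i * of_nat C) + (\<Sum>i\<in>I0. c i * of_nat N)"
      proof -
        have "(\<Sum>i\<in>I. c i * of_nat (if i \<in> I0 then N else C)) =
            (\<Sum>i\<in>I - I0. c i * of_nat (if i \<in> I0 then N else C)) + (\<Sum>i\<in>I0. c i * of_nat (if i \<in> I0 then N else C))"
          by (rule sum.subset_diff[OF I0I finI])
        then show ?thesis by simp
      qed
      also have "\<dots> = of_nat C * (\<Sum>i\<in>I - I0. c i) + of_nat N * (\<Sum>i\<in>I0. c i)"
        by (simp add: sum_distrib_left sum_distrib_right mult.commute)
      also have "(\<Sum>i\<in>I - I0. c i) = - (\<Sum>i\<in>I0. c i)"
        using D0 sum.subset_diff[OF I0I finI, of c] by (simp add: eq_neg_iff_add_eq_0)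
      finally have tot: "(\<Sum>l<N. A l) = (of_nat N - of_nat C) * (\<Sum>i\<in>I0. c i)"
        by (simp add: algebra_simps)
      have "(\<Sum>l<N. A l) = 0" using A0 by simp
      then have z: "(of_nat N - of_nat C) * (\<Sum>i\<in>I0. c i) = (0::'k)" using tot by simp
      have CN: "C < N"
      proof -
        have "\<gamma>0 \<noteq> 0" using g0(2) tr_zero by auto
        then obtain e where e: "e < N" "\<gamma>0 = X ^ e mod f" using F_pow g0(1) by blast
        have t1: "tr (X ^ e mod f) = 1" using e(2) g0(2) by simp
        have ne: "e \<notin> {l\<in>{..<N}. tr (X ^ l mod f) = 0}" using t1 by simp
        have sub: "{l\<in>{..<N}. tr (X ^ l mod f) = 0} \<subseteq> {..<N}" by blast
        have "{l\<in>{..<N}. tr (X ^ l mod f) = 0} \<noteq> {..<N}" using ne e(1) by blast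
        then have "{l\<in>{..<N}. tr (X ^ l mod f) = 0} \<subset> {..<N}" using sub by blast
        then have "card {l\<in>{..<N}. tr (X ^ l mod f) = 0} < card {..<N}" by (rule psubset_card_mono[OF finite_lessThan])
        then show ?thesis unfolding C_def by simp
      qed
      have eq: "(of_nat N - of_nat C :: 'k) = of_nat (N - C)" using CN by (simp add: of_nat_diff)
      have nz: "of_nat (N - C) \<noteq> (0::'k)"
      proof
        assume "of_nat (N - C) = (0::'k)"
        then have "N - C = 0" by (simp only: of_nat_eq_0_iff)
        then show False using CN by simp
      qed
      have z': "of_nat (N - C) * (\<Sum>i\<in>I0. c i) = (0::'k)" using z unfolding eq .
      have "(\<Sum>i\<in>I0. c i) = 0" using z' nz by (metis mult_eq_0_iff)
      then show ?thesis using hze hz by simp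
    qed
  qed
qed

end


theorem mainTheorem10:
  fixes f :: "bit poly" and n :: nat and h :: "rep set \<Rightarrow> 'k::field_char_0"
  assumes "n \<ge> 2" and "primitive_poly f n"
    and "h \<in> steinberg f n" and "h (z_e f n) \<noteq> 0"
  shows "Gtop f n interior_of supp f n h \<noteq> {} \<and> h \<notin> singular f n"
proof -
  interpret prim f n using assms(1,2) by unfold_locales
  have "Gtop f n interior_of supp f n h \<noteq> {}" by (rule main_interior[OF assms(3,4)])
  then show ?thesis unfolding singular_def by blast
qed

end
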